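(* Let $k$ be a field, $R=k[x_i\mid i\in\mathbb N]$ the commutative polynomial ring in countably many variables, and $M=\bigoplus_{i\in\mathbb N}R[\tfrac1{x_i}]$. Then $M$ is fp-faithfully flat but not faithfully flat; indeed $(R/\mathfrak m)\otimes_RM=0$ for $\mathfrak m=\langle x_i\mid i\in\mathbb N\rangle$.
   Context: An $R$-module $M$ is flat if $-\otimes_RM$ is exact, faithfully flat if it is flat and $-\otimes_RM$ is faithful on all $R$-modules, and fp-faithfully flat if it is flat and $-\otimes_RM$ restricted to finitely presented $R$-modules is a faithful functor to $\mathbf{Ab}$. $R[\tfrac1{x_i}]$ is the localization of $R$ at $x_i$. *)

theory Defs
  imports "HOL-Algebra.Algebra" "HOL-Library.Poly_Mapping"
          "HOL-Computational_Algebra.Fraction_Field"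
begin

definition mod_hom :: "('r, 'x) ring_scheme \<Rightarrow> ('r, 'a) module \<Rightarrow> ('r, 'b) module \<Rightarrow> ('a \<Rightarrow> 'b) \<Rightarrow> bool" where
  "mod_hom R N N' f \<longleftrightarrow> f \<in> carrier N \<rightarrow> carrier N' \<and>
     (\<forall>x\<in>carrier N. \<forall>y\<in>carrier N. f (x \<oplus>\<^bsub>N\<^esub> y) = f x \<oplus>\<^bsub>N'\<^esub> f y) \<and>
     (\<forall>r\<in>carrier R. \<forall>x\<in>carrier N. f (r \<odot>\<^bsub>N\<^esub> x) = r \<odot>\<^bsub>N'\<^esub> f x)"

definition exact_at :: "('r, 'a) module \<Rightarrow> ('r, 'b) module \<Rightarrow> ('r, 'c) module \<Rightarrow> ('a \<Rightarrow> 'b) \<Rightarrow> ('b \<Rightarrow> 'c) \<Rightarrow> bool" where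
  "exact_at N1 N2 N3 f g \<longleftrightarrow> f ` carrier N1 = {y \<in> carrier N2. g y = \<zero>\<^bsub>N3\<^esub>}"

text \<open>Tensor product N \<otimes>_R M as an abelian group: formal Z-linear combinations
  of pairs (n,m) in carrier N \<times> carrier M, modulo the subgroup generated by the
  bilinearity/balancing relators.\<close>
definition formal_sums :: "('r, 'a) module \<Rightarrow> ('r, 'b) module \<Rightarrow> (('a \<times> 'b) \<Rightarrow>\<^sub>0 int) set" where
  "formal_sums N M = {\<phi>. Poly_Mapping.keys \<phi> \<subseteq> carrier N \<times> carrier M}"

definition tensor_relators :: "('r, 'x) ring_scheme \<Rightarrow> ('r, 'a) module \<Rightarrow> ('r, 'b) module \<Rightarrow> (('a \<times> 'b) \<Rightarrow>\<^sub>0 int) set" where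
  "tensor_relators R N M =
     {Poly_Mapping.single (n \<oplus>\<^bsub>N\<^esub> n', m) 1 - Poly_Mapping.single (n, m) 1 - Poly_Mapping.single (n', m) 1
        | n n' m. n \<in> carrier N \<and> n' \<in> carrier N \<and> m \<in> carrier M}
   \<union> {Poly_Mapping.single (n, m \<oplus>\<^bsub>M\<^esub> m') 1 - Poly_Mapping.single (n, m) 1 - Poly_Mapping.single (n, m') 1
        | n m m'. n \<in> carrier N \<and> m \<in> carrier M \<and> m' \<in> carrier M}
   \<union> {Poly_Mapping.single (r \<odot>\<^bsub>N\<^esub> n, m) 1 - Poly_Mapping.single (n, r \<odot>\<^bsub>M\<^esub> m) 1
        | r n m. r \<in> carrier R \<and> n \<in> carrier N \<and> m \<in> carrier M}"

text \<open>The subgroup generated by the relators; a formal sum represents 0 in N \<otimes>_R M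
  iff it lies in this subgroup.\<close>
inductive_set tensor_rel :: "('r, 'x) ring_scheme \<Rightarrow> ('r, 'a) module \<Rightarrow> ('r, 'b) module \<Rightarrow> (('a \<times> 'b) \<Rightarrow>\<^sub>0 int) set"
  for R N M where
  zero: "0 \<in> tensor_rel R N M"
| plus: "x \<in> tensor_rel R N M \<Longrightarrow> \<rho> \<in> tensor_relators R N M \<Longrightarrow> x + \<rho> \<in> tensor_rel R N M"
| minus: "x \<in> tensor_rel R N M \<Longrightarrow> \<rho> \<in> tensor_relators R N M \<Longrightarrow> x - \<rho> \<in> tensor_rel R N M"

text \<open>The map f \<otimes> id_M on formal sums.\<close>
definition push :: "('a \<Rightarrow> 'c) \<Rightarrow> (('a \<times> 'b) \<Rightarrow>\<^sub>0 int) \<Rightarrow> (('c \<times> 'b) \<Rightarrow>\<^sub>0 int)" where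
  "push f \<phi> = (\<Sum>p\<in>Poly_Mapping.keys \<phi>. Poly_Mapping.single (f (fst p), snd p) (Poly_Mapping.lookup \<phi> p))"

text \<open>Flatness: - \<otimes>_R M preserves exactness of every sequence N1 -> N2 -> N3 of
  R-modules (the carriers may live in arbitrary types 'a, 'b, 'c).\<close>
definition flat_mod :: "('r, 'x) ring_scheme \<Rightarrow> ('r, 'm) module \<Rightarrow> 'a itself \<Rightarrow> 'b itself \<Rightarrow> 'c itself \<Rightarrow> bool" where
  "flat_mod R M _ _ _ \<longleftrightarrow> module R M \<and>
    (\<forall>(N1 :: ('r, 'a) module) (N2 :: ('r, 'b) module) (N3 :: ('r, 'c) module) f g.
       module R N1 \<and> module R N2 \<and> module R N3 \<and> mod_hom R N1 N2 f \<and> mod_hom R N2 N3 g \<and>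
       exact_at N1 N2 N3 f g \<longrightarrow>
       (\<forall>\<phi>\<in>formal_sums N2 M. push g \<phi> \<in> tensor_rel R N3 M \<longleftrightarrow>
           (\<exists>\<psi>\<in>formal_sums N1 M. \<phi> - push f \<psi> \<in> tensor_rel R N2 M)))"

text \<open>Faithfulness of - \<otimes>_R M on homomorphisms between modules in a class P:
  if f \<otimes> M = g \<otimes> M then f = g.\<close>
definition tensor_faithful_on :: "('r, 'x) ring_scheme \<Rightarrow> ('r, 'm) module \<Rightarrow>
    (('r, 'a) module \<Rightarrow> bool) \<Rightarrow> (('r, 'b) module \<Rightarrow> bool) \<Rightarrow> bool" where
  "tensor_faithful_on R M P Q \<longleftrightarrow>
    (\<forall>(N :: ('r, 'a) module) (N' :: ('r, 'b) module) f g.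
       module R N \<and> module R N' \<and> P N \<and> Q N' \<and> mod_hom R N N' f \<and> mod_hom R N N' g \<and>
       (\<forall>\<phi>\<in>formal_sums N M. push f \<phi> - push g \<phi> \<in> tensor_rel R N' M) \<longrightarrow>
       (\<forall>x\<in>carrier N. f x = g x))"

text \<open>Finitely presented: there is a surjection R^n -> N whose kernel is a finitely
  generated submodule of R^n (elements of R^n are functions nat => 'r vanishing from n on).\<close>
definition fin_presented :: "('r, 'x) ring_scheme \<Rightarrow> ('r, 'a) module \<Rightarrow> bool" where
  "fin_presented R N \<longleftrightarrow>
    (\<exists>(n::nat) gs. gs \<in> {..<n} \<rightarrow> carrier N \<and>
       (\<forall>y\<in>carrier N. \<exists>c. c \<in> {..<n} \<rightarrow> carrier R \<and>
            y = finsum N (\<lambda>j. c j \<odot>\<^bsub>N\<^esub> gs j) {..<n}) \<and>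
       (\<exists>(m::nat) ks. (\<forall>l<m. (\<forall>j. ks l j \<in> carrier R) \<and> (\<forall>j\<ge>n. ks l j = \<zero>\<^bsub>R\<^esub>)) \<and>
          {c. (\<forall>j. c j \<in> carrier R) \<and> (\<forall>j\<ge>n. c j = \<zero>\<^bsub>R\<^esub>) \<and>
              finsum N (\<lambda>j. c j \<odot>\<^bsub>N\<^esub> gs j) {..<n} = \<zero>\<^bsub>N\<^esub>}
          = {(\<lambda>j. finsum R (\<lambda>l. a l \<otimes>\<^bsub>R\<^esub> ks l j) {..<m}) | a. a \<in> {..<m} \<rightarrow> carrier R}))"

definition faithfully_flat :: "('r, 'x) ring_scheme \<Rightarrow> ('r, 'm) module \<Rightarrow> 'a itself \<Rightarrow> 'b itself \<Rightarrow> 'c itself \<Rightarrow> bool" where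
  "faithfully_flat R M ta tb tc \<longleftrightarrow> flat_mod R M ta tb tc \<and>
     tensor_faithful_on R M (\<lambda>N::('r,'a) module. True) (\<lambda>N'::('r,'b) module. True)"

definition fp_faithfully_flat :: "('r, 'x) ring_scheme \<Rightarrow> ('r, 'm) module \<Rightarrow> 'a itself \<Rightarrow> 'b itself \<Rightarrow> 'c itself \<Rightarrow> bool" where
  "fp_faithfully_flat R M ta tb tc \<longleftrightarrow> flat_mod R M ta tb tc \<and>
     tensor_faithful_on R M (\<lambda>N::('r,'a) module. fin_presented R N) (\<lambda>N'::('r,'b) module. fin_presented R N')"

definition quot_module :: "('r, 'x) ring_scheme \<Rightarrow> 'r set \<Rightarrow> ('r, 'r set) module" where
  "quot_module R I = \<lparr>partial_object.carrier = carrier (R Quot I), monoid.mult = monoid.mult (R Quot I),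
      monoid.one = monoid.one (R Quot I), ring.zero = ring.zero (R Quot I), ring.add = ring.add (R Quot I),
      module.smult = (\<lambda>s C. monoid.mult (R Quot I) (a_r_coset R I s) C)\<rparr>"

text \<open>R = k[x_i | i \<in> nat]: polynomials with monomials nat =>0 nat.\<close>
type_synonym 'k pR = "(nat \<Rightarrow>\<^sub>0 nat) \<Rightarrow>\<^sub>0 'k"

definition ring_of_type :: "('r::comm_ring_1) ring" where
  "ring_of_type = \<lparr>partial_object.carrier = UNIV, monoid.mult = (*), monoid.one = 1, ring.zero = 0, ring.add = (+)\<rparr>"

abbreviation polyR :: "('k::field) pR ring" where
  "polyR \<equiv> ring_of_type"

definition var :: "nat \<Rightarrow> ('k::field) pR" where
  "var i = Poly_Mapping.single (Poly_Mapping.single i 1) 1"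

text \<open>R[1/x_i], realised inside the fraction field of the domain R.\<close>
definition loc_var :: "nat \<Rightarrow> ('k::field) pR fract set" where
  "loc_var i = {Fract a (var i ^ n) | a n. True}"

text \<open>M = \<Oplus>_i R[1/x_i]: finitely supported families with i-th entry in R[1/x_i].\<close>
definition Mmod :: "('k::field pR, nat \<Rightarrow> 'k pR fract) module" where
  "Mmod = \<lparr>partial_object.carrier = {v. finite {i. v i \<noteq> 0} \<and> (\<forall>i. v i \<in> loc_var i)},
      monoid.mult = (\<lambda>v w i. v i * w i), monoid.one = (\<lambda>i. 1), ring.zero = (\<lambda>i. 0), ring.add = (\<lambda>v w i. v i + w i),
      module.smult = (\<lambda>r v i. Fract r 1 * v i)\<rparr>"

definition max_ideal :: "('k::field) pR set" where
  "max_ideal = genideal polyR (range var)"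

end

theory Submission
  imports Defs
begin

lemma rot_simps[simp]:
  "carrier (ring_of_type::'r::comm_ring_1 ring) = UNIV"
  "monoid.mult (ring_of_type::'r::comm_ring_1 ring) = (*)"
  "monoid.one (ring_of_type::'r::comm_ring_1 ring) = 1"
  "ring.zero (ring_of_type::'r::comm_ring_1 ring) = 0"
  "ring.add (ring_of_type::'r::comm_ring_1 ring) = (+)"
  by (simp_all add: ring_of_type_def)

lemma ex_neg: "\<exists>y. (x::'r::comm_ring_1) + y = 0"
  by (rule exI[of _ "- x"]) simp

lemma cring_rot: "cring (ring_of_type::'r::comm_ring_1 ring)"
  by (rule cringI) (auto intro!: abelian_groupI comm_monoidI simp: algebra_simps intro: ex_neg)

lemma rot_a_inv[simp]: "a_inv (ring_of_type::'r::comm_ring_1 ring) x = - x"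
proof -
  interpret cring "ring_of_type::'r ring" by (rule cring_rot)
  show ?thesis by (rule minus_equality) auto
qed

lemma Mmod_simps[simp]:
  "carrier Mmod = {v. finite {i. v i \<noteq> 0} \<and> (\<forall>i. v i \<in> loc_var i)}"
  "ring.zero Mmod = (\<lambda>i. 0)"
  "ring.add Mmod = (\<lambda>v w i. v i + w i)"
  "module.smult Mmod = (\<lambda>r v i. Fract r 1 * v i)"
  by (simp_all add: Mmod_def)

lemma var_nz[simp]: "var i \<noteq> (0::'k::field pR)"
  unfolding var_def by (metis lookup_single_eq one_neq_zero single_zero)

lemma loc_var_add: "a \<in> loc_var i \<Longrightarrow> b \<in> loc_var i \<Longrightarrow> a + b \<in> loc_var i"
proof -
  assume "a \<in> loc_var i" "b \<in> loc_var i"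
  then obtain x n y m where "a = Fract x (var i ^ n)" "b = Fract y (var i ^ m)"
    unfolding loc_var_def by auto
  then have "a + b = Fract (x * var i ^ m + y * var i ^ n) (var i ^ (n+m))"
    by (simp add: power_add mult.commute)
  then show ?thesis unfolding loc_var_def by blast
qed

lemma loc_var_minus: "a \<in> loc_var i \<Longrightarrow> - a \<in> loc_var i"
  unfolding loc_var_def by (auto, blast)

lemma loc_var_smult: "a \<in> loc_var i \<Longrightarrow> Fract r 1 * a \<in> loc_var i"
  unfolding loc_var_def by (auto simp: mult.commute, blast)

lemma loc_var_zero[simp]: "0 \<in> loc_var i"
  unfolding loc_var_def by (auto intro!: exI[of _ 0] exI[of _ 0] simp: Zero_fract_def)

lemma Fract_add1: "Fract (a + b) 1 = Fract a 1 + Fract (b::'a::idom) 1"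
  by simp
lemma Fract_mult1: "Fract (a * b) 1 = Fract a 1 * Fract (b::'a::idom) 1"
  by simp
lemma Fract_one1: "Fract 1 1 = (1::'a::idom fract)"
  by (simp add: One_fract_def)

lemma module_Mmod: "module (polyR::'k::field pR ring) Mmod"
proof (rule moduleI)
  show "cring (polyR::'k pR ring)" by (rule cring_rot)
  show "abelian_group (Mmod::('k pR, _) module)"
  proof (rule abelian_groupI)
    fix x y assume "x \<in> carrier (Mmod::('k pR, _) module)" "y \<in> carrier (Mmod::('k pR, _) module)"
    then show "x \<oplus>\<^bsub>Mmod\<^esub> y \<in> carrier Mmod"
      by (auto simp: loc_var_add intro: finite_subset[of _ "{i. x i \<noteq> 0} \<union> {i. y i \<noteq> 0}"])
  next
    fix x assume "x \<in> carrier (Mmod::('k pR, _) module)"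
    then show "\<exists>y \<in> carrier Mmod. y \<oplus>\<^bsub>Mmod\<^esub> x = \<zero>\<^bsub>Mmod\<^esub>"
      by (auto intro!: exI[of _ "\<lambda>i. - x i"] simp: loc_var_minus)
  qed (auto simp: algebra_simps)
next
  fix a x assume "a \<in> carrier (polyR::'k pR ring)" "x \<in> carrier (Mmod::('k pR, _) module)"
  then show "a \<odot>\<^bsub>Mmod\<^esub> x \<in> carrier Mmod"
    by (auto simp: loc_var_smult intro: finite_subset[of _ "{i. x i \<noteq> 0}"])
next
  fix a b x
  show "(a \<oplus>\<^bsub>polyR\<^esub> b) \<odot>\<^bsub>Mmod\<^esub> x = a \<odot>\<^bsub>Mmod\<^esub> x \<oplus>\<^bsub>Mmod\<^esub> b \<odot>\<^bsub>Mmod\<^esub> (x::nat \<Rightarrow> 'k pR fract)"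
    by (simp only: Mmod_simps rot_simps Fract_add1 distrib_right)
next
  fix a x y
  show "a \<odot>\<^bsub>Mmod\<^esub> (x \<oplus>\<^bsub>Mmod\<^esub> y) = a \<odot>\<^bsub>Mmod\<^esub> x \<oplus>\<^bsub>Mmod\<^esub> a \<odot>\<^bsub>Mmod\<^esub> (y::nat \<Rightarrow> 'k pR fract)"
    by (simp only: Mmod_simps distrib_left)
next
  fix a b x
  show "(a \<otimes>\<^bsub>polyR\<^esub> b) \<odot>\<^bsub>Mmod\<^esub> x = a \<odot>\<^bsub>Mmod\<^esub> (b \<odot>\<^bsub>Mmod\<^esub> (x::nat \<Rightarrow> 'k pR fract))"
    by (simp only: Mmod_simps rot_simps Fract_mult1 mult.assoc)
next
  fix x
  show "\<one>\<^bsub>polyR\<^esub> \<odot>\<^bsub>Mmod\<^esub> x = (x::nat \<Rightarrow> 'k pR fract)"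
    by (simp only: Mmod_simps rot_simps Fract_one1 mult_1_left)
qed

definition lin :: "('b, 'c) ring_scheme \<Rightarrow> ('x \<Rightarrow> 'b) \<Rightarrow> ('x \<Rightarrow>\<^sub>0 int) \<Rightarrow> 'b" where
  "lin N F \<phi> = finsum N (\<lambda>p. add_pow N (Poly_Mapping.lookup \<phi> p) (F p)) (Poly_Mapping.keys \<phi>)"

context abelian_group begin

lemma add_pow_int0[simp]: "add_pow G (0::int) x = \<zero>"
  by (simp add: add_pow_def)

lemma lin_superset:
  assumes F: "\<And>p. F p \<in> carrier G" and K: "finite K" "Poly_Mapping.keys \<phi> \<subseteq> K"
  shows "lin G F \<phi> = (\<Oplus>p\<in>K. add_pow G (Poly_Mapping.lookup \<phi> p) (F p))"
  unfolding lin_def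
  by (rule add.finprod_mono_neutral_cong_left) (use assms in \<open>auto simp: in_keys_iff\<close>)

lemma lin_closed: "(\<And>p. F p \<in> carrier G) \<Longrightarrow> lin G F \<phi> \<in> carrier G"
  unfolding lin_def by (intro finsum_closed) auto

lemma lin_add:
  assumes F: "\<And>p. F p \<in> carrier G"
  shows "lin G F (a + b) = lin G F a \<oplus> lin G F b"
proof -
  let ?K = "Poly_Mapping.keys a \<union> Poly_Mapping.keys b"
  have "lin G F (a + b) = (\<Oplus>p\<in>?K. add_pow G (Poly_Mapping.lookup (a+b) p) (F p))"
    using F keys_add[of a b] by (intro lin_superset) auto
  also have "\<dots> = (\<Oplus>p\<in>?K. add_pow G (Poly_Mapping.lookup a p) (F p) \<oplus> add_pow G (Poly_Mapping.lookup b p) (F p))"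
    using F by (intro add.finprod_cong') (auto simp: lookup_add add.int_pow_mult)
  also have "\<dots> = (\<Oplus>p\<in>?K. add_pow G (Poly_Mapping.lookup a p) (F p)) \<oplus> (\<Oplus>p\<in>?K. add_pow G (Poly_Mapping.lookup b p) (F p))"
    using F by (intro finsum_addf) auto
  also have "\<dots> = lin G F a \<oplus> lin G F b"
    using F by (subst (1 2) lin_superset[where K="?K"]) auto
  finally show ?thesis .
qed

lemma lin_zero[simp]: "lin G F 0 = \<zero>"
  unfolding lin_def by simp

lemma lin_uminus:
  assumes F: "\<And>p. F p \<in> carrier G"
  shows "lin G F (- a) = \<ominus> lin G F a"
proof -
  have "lin G F (- a) \<oplus> lin G F a = \<zero>"
    using lin_add[OF F, where a="-a" and b=a, symmetric] by simp
  moreover have "lin G F (- a) \<in> carrier G" "lin G F a \<in> carrier G" using F by (auto intro: lin_closed)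
  ultimately show ?thesis by (metis add.inv_equality)
qed

lemma lin_diff:
  assumes F: "\<And>p. F p \<in> carrier G"
  shows "lin G F (a - b) = lin G F a \<ominus> lin G F b"
  using lin_add[OF F, where a=a and b="-b"] lin_uminus[OF F, where a=b] by (simp add: a_minus_def)

lemma lin_of:
  assumes F: "\<And>p. F p \<in> carrier G"
  shows "lin G F (frag_of p) = F p"
  unfolding lin_def using F by simp

lemma lin_cong: "(\<And>p. p \<in> Poly_Mapping.keys \<phi> \<Longrightarrow> F p = F' p) \<Longrightarrow> (\<And>p. F' p \<in> carrier G) \<Longrightarrow> lin G F \<phi> = lin G F' \<phi>"
  unfolding lin_def by (rule add.finprod_cong') auto

lemma lin_zero_fun: "(\<And>p. p \<in> Poly_Mapping.keys \<phi> \<Longrightarrow> F p = \<zero>) \<Longrightarrow> lin G F \<phi> = \<zero>"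
proof -
  assume "\<And>p. p \<in> Poly_Mapping.keys \<phi> \<Longrightarrow> F p = \<zero>"
  then have "lin G F \<phi> = lin G (\<lambda>_. \<zero>) \<phi>" by (rule lin_cong) auto
  also have "\<dots> = \<zero>" unfolding lin_def by (simp add: add.int_pow_one)
  finally show ?thesis .
qed

lemma lin_sum:
  assumes F: "\<And>p. F p \<in> carrier G" and I: "finite I"
  shows "lin G F (\<Sum>i\<in>I. \<phi> i) = (\<Oplus>i\<in>I. lin G F (\<phi> i))"
  using I by (induction I rule: finite_induct) (auto simp: lin_add[OF F] lin_closed[OF F] finsum_insert)

end

lemma trel_add:
  assumes x: "x \<in> tensor_rel R N M" shows "y \<in> tensor_rel R N M \<Longrightarrow> x + y \<in> tensor_rel R N M"
proof (induction y rule: tensor_rel.induct)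
  case zero then show ?case using x by simp
next
  case (plus y \<rho>)
  from tensor_rel.plus[OF plus.IH plus.hyps(2)] show ?case by (simp add: add.assoc)
next
  case (minus y \<rho>)
  from tensor_rel.minus[OF minus.IH minus.hyps(2)] show ?case by (simp add: add_diff_eq)
qed

lemma trel_uminus: "x \<in> tensor_rel R N M \<Longrightarrow> - x \<in> tensor_rel R N M"
proof (induction x rule: tensor_rel.induct)
  case zero then show ?case by (simp add: tensor_rel.zero)
next
  case (plus y \<rho>)
  from tensor_rel.minus[OF plus.IH plus.hyps(2)] show ?case by simp
next
  case (minus y \<rho>)
  from tensor_rel.plus[OF minus.IH minus.hyps(2)] show ?case by simp
qed

lemma trel_diff: "x \<in> tensor_rel R N M \<Longrightarrow> y \<in> tensor_rel R N M \<Longrightarrow> x - y \<in> tensor_rel R N M"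
  using trel_add[of x R N M "- y"] trel_uminus[of y R N M] by simp

lemma trel_zero[simp,intro]: "0 \<in> tensor_rel R N M"
  by (rule tensor_rel.zero)

lemma trel_cmul: "x \<in> tensor_rel R N M \<Longrightarrow> frag_cmul k x \<in> tensor_rel R N M"
  by (rule frag_closure_minus_cmul[where P="\<lambda>x. x \<in> tensor_rel R N M"]) (auto intro: trel_diff)

lemma trel_sum: "(\<And>i. i \<in> I \<Longrightarrow> f i \<in> tensor_rel R N M) \<Longrightarrow> sum f I \<in> tensor_rel R N M"
  by (induction I rule: infinite_finite_induct) (auto intro: trel_add)

lemma trel_relator: "\<rho> \<in> tensor_relators R N M \<Longrightarrow> \<rho> \<in> tensor_rel R N M"
  using tensor_rel.plus[OF tensor_rel.zero] by fastforce

lemma trel_R1: "n \<in> carrier N \<Longrightarrow> n' \<in> carrier N \<Longrightarrow> m \<in> carrier M \<Longrightarrow>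
   frag_of (n \<oplus>\<^bsub>N\<^esub> n', m) - frag_of (n, m) - frag_of (n', m) \<in> tensor_rel R N M"
  by (rule trel_relator) (unfold tensor_relators_def, blast)

lemma trel_R2: "n \<in> carrier N \<Longrightarrow> m \<in> carrier M \<Longrightarrow> m' \<in> carrier M \<Longrightarrow>
   frag_of (n, m \<oplus>\<^bsub>M\<^esub> m') - frag_of (n, m) - frag_of (n, m') \<in> tensor_rel R N M"
  by (rule trel_relator) (unfold tensor_relators_def, blast)

lemma trel_R3: "r \<in> carrier R \<Longrightarrow> n \<in> carrier N \<Longrightarrow> m \<in> carrier M \<Longrightarrow>
   frag_of (r \<odot>\<^bsub>N\<^esub> n, m) - frag_of (n, r \<odot>\<^bsub>M\<^esub> m) \<in> tensor_rel R N M"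
  by (rule trel_relator) (unfold tensor_relators_def, blast)

lemma trel_zero_left:
  assumes "abelian_group N" "m \<in> carrier M"
  shows "frag_of (\<zero>\<^bsub>N\<^esub>, m) \<in> tensor_rel R N M"
proof -
  interpret abelian_group N by fact
  have "frag_of (\<zero>\<^bsub>N\<^esub> \<oplus>\<^bsub>N\<^esub> \<zero>\<^bsub>N\<^esub>, m) - frag_of (\<zero>\<^bsub>N\<^esub>, m) - frag_of (\<zero>\<^bsub>N\<^esub>, m) \<in> tensor_rel R N M"
    using assms by (intro trel_R1) auto
  then have "- frag_of (\<zero>\<^bsub>N\<^esub>, m) \<in> tensor_rel R N M" by simp
  then show ?thesis using trel_uminus[of "- frag_of (\<zero>\<^bsub>N\<^esub>, m)"] by simp
qed

lemma trel_minus_left: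
  assumes "abelian_group N" "m \<in> carrier M" "x \<in> carrier N" "y \<in> carrier N"
  shows "frag_of (x \<ominus>\<^bsub>N\<^esub> y, m) - frag_of (x, m) + frag_of (y, m) \<in> tensor_rel R N M"
proof -
  interpret abelian_group N by fact
  have "frag_of ((x \<ominus>\<^bsub>N\<^esub> y) \<oplus>\<^bsub>N\<^esub> y, m) - frag_of (x \<ominus>\<^bsub>N\<^esub> y, m) - frag_of (y, m) \<in> tensor_rel R N M"
    using assms by (intro trel_R1) auto
  moreover have "(x \<ominus>\<^bsub>N\<^esub> y) \<oplus>\<^bsub>N\<^esub> y = x" using assms by (simp add: a_minus_def add.m_assoc l_neg)
  ultimately have "frag_of x' - frag_of (x \<ominus>\<^bsub>N\<^esub> y, m) - frag_of (y, m) \<in> tensor_rel R N M" if "x' = (x,m)" for x'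
    using that by simp
  then have "- (frag_of (x, m) - frag_of (x \<ominus>\<^bsub>N\<^esub> y, m) - frag_of (y, m)) \<in> tensor_rel R N M"
    using trel_uminus by blast
  then show ?thesis by (simp add: algebra_simps)
qed

lemma trel_left_lin:
  assumes N: "abelian_group N" and m: "m \<in> carrier M" and F: "\<And>p. F p \<in> carrier N"
  shows "frag_of (lin N F \<phi>, m) - frag_extend (\<lambda>p. frag_of (F p, m)) \<phi> \<in> tensor_rel R N M"
proof -
  interpret abelian_group N by fact
  have "Poly_Mapping.keys \<phi> \<subseteq> UNIV" by simp
  then show ?thesis
  proof (induction \<phi> rule: frag_induction)
    case zero
    then show ?case using trel_zero_left[OF N m] by simp
  next
    case (one x)
    then show ?case by (simp add: lin_of F)
  next
    case (diff a b)
    have "frag_of (lin N F (a - b), m) - frag_extend (\<lambda>p. frag_of (F p, m)) (a - b) =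
       (frag_of (lin N F a \<ominus>\<^bsub>N\<^esub> lin N F b, m) - frag_of (lin N F a, m) + frag_of (lin N F b, m))
       + (frag_of (lin N F a, m) - frag_extend (\<lambda>p. frag_of (F p, m)) a)
       - (frag_of (lin N F b, m) - frag_extend (\<lambda>p. frag_of (F p, m)) b)"
      by (simp add: lin_diff F frag_extend_diff algebra_simps)
    also have "\<dots> \<in> tensor_rel R N M"
    proof -
      have "lin N F a \<in> carrier N" "lin N F b \<in> carrier N" using F by (auto intro: lin_closed)
      from trel_minus_left[OF N m this] have 1: "frag_of (lin N F a \<ominus>\<^bsub>N\<^esub> lin N F b, m) - frag_of (lin N F a, m) + frag_of (lin N F b, m) \<in> tensor_rel R N M" .
      show ?thesis by (rule trel_diff[OF trel_add[OF 1]]) (use diff in auto)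
    qed
    finally show ?case .
  qed
qed

lemma trel_right_sum:
  assumes M: "abelian_group M" and n: "n \<in> carrier N" and I: "finite I" and g: "g \<in> I \<rightarrow> carrier M"
  shows "frag_of (n, finsum M g I) - (\<Sum>i\<in>I. frag_of (n, g i)) \<in> tensor_rel R N M"
  using I g
proof (induction I rule: finite_induct)
  case empty
  interpret abelian_group M by fact
  have "frag_of (n, \<zero>\<^bsub>M\<^esub> \<oplus>\<^bsub>M\<^esub> \<zero>\<^bsub>M\<^esub>) - frag_of (n, \<zero>\<^bsub>M\<^esub>) - frag_of (n, \<zero>\<^bsub>M\<^esub>) \<in> tensor_rel R N M"
    using n by (intro trel_R2) auto
  then have "- frag_of (n, \<zero>\<^bsub>M\<^esub>) \<in> tensor_rel R N M"
    by simp
  from trel_uminus[OF this] show ?case by simp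
next
  case (insert i I)
  interpret abelian_group M by fact
  have gi: "g i \<in> carrier M" and gI: "g \<in> I \<rightarrow> carrier M" using insert by auto
  have "frag_of (n, finsum M g (insert i I)) - (\<Sum>i\<in>insert i I. frag_of (n, g i)) =
      (frag_of (n, g i \<oplus>\<^bsub>M\<^esub> finsum M g I) - frag_of (n, g i) - frag_of (n, finsum M g I))
      + (frag_of (n, finsum M g I) - (\<Sum>i\<in>I. frag_of (n, g i)))"
    using insert gi gI by (simp add: finsum_insert)
  also have "\<dots> \<in> tensor_rel R N M"
    using insert gi gI n by (intro trel_add trel_R2) auto
  finally show ?case .
qed

lemma frag_cmul_of: "frag_cmul k (frag_of x) = Poly_Mapping.single x k"
  by (rule poly_mapping_eqI) (simp add: lookup_single)

lemma push_fe: "push f \<phi> = frag_extend (\<lambda>p. frag_of (f (fst p), snd p)) \<phi>"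
  unfolding push_def frag_extend_def by (simp add: frag_cmul_of)

lemma push_diff: "push f (a - b) = push f a - push f b"
  by (simp add: push_fe frag_extend_diff)

lemma push_add: "push f (a + b) = push f a + push f b"
  by (simp add: push_fe frag_extend_add)

lemma push_of: "push f (frag_of (n, m)) = frag_of (f n, m)"
  by (simp add: push_fe)

lemma push_0[simp]: "push f 0 = 0"
  by (simp add: push_fe)

lemma push_sum: "push f (sum g I) = (\<Sum>i\<in>I. push f (g i))"
  by (induction I rule: infinite_finite_induct) (simp_all add: push_add)

lemma push_push: "push g (push f \<psi>) = push (g \<circ> f) \<psi>"
proof -
  have "push g (push f \<psi>) = frag_extend (frag_of \<circ> (\<lambda>p. (g (fst p), snd p))) (frag_extend (frag_of \<circ> (\<lambda>p. (f (fst p), snd p))) \<psi>)"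
    by (simp add: push_fe o_def)
  also have "\<dots> = frag_extend (frag_of \<circ> (\<lambda>p. (g (fst p), snd p)) \<circ> (\<lambda>p. (f (fst p), snd p))) \<psi>"
    by (rule frag_extend_compose)
  finally show ?thesis by (simp add: push_fe o_def)
qed

lemma keys_push: "Poly_Mapping.keys (push f \<phi>) \<subseteq> (\<lambda>p. (f (fst p), snd p)) ` Poly_Mapping.keys \<phi>"
  unfolding push_fe using keys_frag_extend[of "\<lambda>p. frag_of (f (fst p), snd p)" \<phi>] by auto

lemma push_formal: "\<phi> \<in> formal_sums N M \<Longrightarrow> f \<in> carrier N \<rightarrow> carrier N' \<Longrightarrow> push f \<phi> \<in> formal_sums N' M"
  unfolding formal_sums_def using keys_push[of f \<phi>] by fastforce

lemma mod_hom_add: "mod_hom R N N' f \<Longrightarrow> x \<in> carrier N \<Longrightarrow> y \<in> carrier N \<Longrightarrow> f (x \<oplus>\<^bsub>N\<^esub> y) = f x \<oplus>\<^bsub>N'\<^esub> f y"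
  unfolding mod_hom_def by blast
lemma mod_hom_smult: "mod_hom R N N' f \<Longrightarrow> r \<in> carrier R \<Longrightarrow> x \<in> carrier N \<Longrightarrow> f (r \<odot>\<^bsub>N\<^esub> x) = r \<odot>\<^bsub>N'\<^esub> f x"
  unfolding mod_hom_def by blast
lemma mod_hom_closed: "mod_hom R N N' f \<Longrightarrow> x \<in> carrier N \<Longrightarrow> f x \<in> carrier N'"
  unfolding mod_hom_def by blast

lemma push_relator:
  assumes f: "mod_hom R N N' f" and \<rho>: "\<rho> \<in> tensor_relators R N M"
  shows "push f \<rho> \<in> tensor_rel R N' M"
  using \<rho> unfolding tensor_relators_def
proof (elim UnE CollectE exE conjE)
  fix n n' m assume *: "\<rho> = frag_of (n \<oplus>\<^bsub>N\<^esub> n', m) - frag_of (n, m) - frag_of (n', m)"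
    "n \<in> carrier N" "n' \<in> carrier N" "m \<in> carrier M"
  then have "push f \<rho> = frag_of (f n \<oplus>\<^bsub>N'\<^esub> f n', m) - frag_of (f n, m) - frag_of (f n', m)"
    by (simp add: push_diff push_of mod_hom_add[OF f])
  then show ?thesis using * mod_hom_closed[OF f] by (simp add: trel_R1)
next
  fix n m m' assume *: "\<rho> = frag_of (n, m \<oplus>\<^bsub>M\<^esub> m') - frag_of (n, m) - frag_of (n, m')"
    "n \<in> carrier N" "m \<in> carrier M" "m' \<in> carrier M"
  then have "push f \<rho> = frag_of (f n, m \<oplus>\<^bsub>M\<^esub> m') - frag_of (f n, m) - frag_of (f n, m')"
    by (simp add: push_diff push_of)
  then show ?thesis using * mod_hom_closed[OF f] by (simp add: trel_R2)
next
  fix r n m assume *: "\<rho> = frag_of (r \<odot>\<^bsub>N\<^esub> n, m) - frag_of (n, r \<odot>\<^bsub>M\<^esub> m)"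
    "r \<in> carrier R" "n \<in> carrier N" "m \<in> carrier M"
  then have "push f \<rho> = frag_of (r \<odot>\<^bsub>N'\<^esub> f n, m) - frag_of (f n, r \<odot>\<^bsub>M\<^esub> m)"
    by (simp add: push_diff push_of mod_hom_smult[OF f])
  then show ?thesis using * mod_hom_closed[OF f] by (simp add: trel_R3)
qed

lemma push_trel:
  assumes f: "mod_hom R N N' f" and x: "x \<in> tensor_rel R N M"
  shows "push f x \<in> tensor_rel R N' M"
  using x
proof (induction x rule: tensor_rel.induct)
  case zero then show ?case by (simp add: push_fe)
next
  case (plus x \<rho>) then show ?case by (simp add: push_add trel_add push_relator[OF f])
next
  case (minus x \<rho>) then show ?case by (simp add: push_diff trel_diff push_relator[OF f])
qed

lemma push_zero_map:
  assumes N': "abelian_group N'" and h: "\<And>p. p \<in> Poly_Mapping.keys \<psi> \<Longrightarrow> f (fst p) = \<zero>\<^bsub>N'\<^esub> \<and> snd p \<in> carrier M"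
  shows "push f \<psi> \<in> tensor_rel R N' M"
proof -
  have "Poly_Mapping.keys \<psi> \<subseteq> {p. f (fst p) = \<zero>\<^bsub>N'\<^esub> \<and> snd p \<in> carrier M}" using h by auto
  then show ?thesis
  proof (induction \<psi> rule: frag_induction)
    case zero then show ?case by (simp add: push_fe)
  next
    case (one x) then show ?case by (cases x) (simp add: push_of trel_zero_left[OF N'])
  next
    case (diff a b) then show ?case by (simp add: push_diff trel_diff)
  qed
qed

lemma hom_minus:
  assumes "abelian_group N" "abelian_group N'" "mod_hom R N N' g" "x \<in> carrier N" "y \<in> carrier N"
  shows "g (x \<ominus>\<^bsub>N\<^esub> y) = g x \<ominus>\<^bsub>N'\<^esub> g y"
proof -
  interpret N: abelian_group N by fact
  interpret N': abelian_group N' by fact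
  have "g (x \<ominus>\<^bsub>N\<^esub> y) \<oplus>\<^bsub>N'\<^esub> g y = g x"
    using assms by (simp add: mod_hom_add[symmetric] a_minus_def N.add.m_assoc N.l_neg)
  have c: "g (x \<ominus>\<^bsub>N\<^esub> y) \<in> carrier N'" "g y \<in> carrier N'" using assms mod_hom_closed[OF assms(3)] by auto
  have "g x \<ominus>\<^bsub>N'\<^esub> g y = (g (x \<ominus>\<^bsub>N\<^esub> y) \<oplus>\<^bsub>N'\<^esub> g y) \<ominus>\<^bsub>N'\<^esub> g y" by (simp add: \<open>g (x \<ominus>\<^bsub>N\<^esub> y) \<oplus>\<^bsub>N'\<^esub> g y = g x\<close>)
  also have "\<dots> = g (x \<ominus>\<^bsub>N\<^esub> y)" using c by (simp add: a_minus_def N'.add.m_assoc N'.r_neg)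
  finally show ?thesis by simp
qed

lemma lin_push:
  assumes N2: "abelian_group N2" and N3: "abelian_group N3" and g: "mod_hom R N2 N3 g"
    and F2: "\<And>p. F2 p \<in> carrier N2" and F3: "\<And>p. F3 p \<in> carrier N3"
    and FF: "\<And>n v. n \<in> carrier N2 \<Longrightarrow> F3 (g n, v) = g (F2 (n, v))"
    and k: "Poly_Mapping.keys \<phi> \<subseteq> carrier N2 \<times> UNIV"
  shows "lin N3 F3 (push g \<phi>) = g (lin N2 F2 \<phi>)"
proof -
  interpret N2: abelian_group N2 by fact
  interpret N3: abelian_group N3 by fact
  have g0: "g \<zero>\<^bsub>N2\<^esub> = \<zero>\<^bsub>N3\<^esub>"
  proof -
    have "g \<zero>\<^bsub>N2\<^esub> = g (\<zero>\<^bsub>N2\<^esub> \<ominus>\<^bsub>N2\<^esub> \<zero>\<^bsub>N2\<^esub>)" by (simp add: a_minus_def N2.r_neg)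
    also have "\<dots> = g \<zero>\<^bsub>N2\<^esub> \<ominus>\<^bsub>N3\<^esub> g \<zero>\<^bsub>N2\<^esub>" by (rule hom_minus[OF N2 N3 g]) auto
    also have "\<dots> = \<zero>\<^bsub>N3\<^esub>" using mod_hom_closed[OF g, of "\<zero>\<^bsub>N2\<^esub>"] by (simp add: a_minus_def N3.r_neg)
    finally show ?thesis .
  qed
  show ?thesis using k
  proof (induction \<phi> rule: frag_induction)
    case zero
    show ?case by (simp add: g0)
  next
    case (one x) then show ?case
      by (cases x) (simp add: push_of N3.lin_of[OF F3] N2.lin_of[OF F2] FF)
  next
    case (diff a b) then show ?case
      by (simp add: push_diff N3.lin_diff[OF F3] N2.lin_diff[OF F2]
          hom_minus[OF N2 N3 g] N2.lin_closed[OF F2])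
  qed
qed

definition cf :: "nat \<Rightarrow> nat \<Rightarrow> 'k::field pR fract \<Rightarrow> 'k pR" where
  "cf i E w = (THE r. w * Fract (var i ^ E) 1 = Fract r 1)"

definition good :: "nat \<Rightarrow> nat \<Rightarrow> 'k::field pR fract \<Rightarrow> bool" where
  "good i E w \<longleftrightarrow> (\<exists>r. w * Fract (var i ^ E) 1 = Fract r 1)"

lemma Fract1_inj: "Fract r 1 = Fract s (1::'a::idom) \<longleftrightarrow> r = s"
  by (simp add: eq_fract)

lemma cf_unique: "w * Fract (var i ^ E) 1 = Fract r 1 \<Longrightarrow> cf i E w = r"
  unfolding cf_def by (rule the_equality) (auto simp: Fract1_inj)

lemma cf_eq: "good i E w \<Longrightarrow> w * Fract (var i ^ E) 1 = Fract (cf i E w) 1"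
  unfolding good_def using cf_unique by metis

lemma good_cf_iff: "w * Fract (var i ^ E) 1 = Fract r 1 \<Longrightarrow> good i E w \<and> cf i E w = r"
  using cf_unique unfolding good_def by blast

lemma good_mono: "good i E w \<Longrightarrow> E \<le> E' \<Longrightarrow> good i E' w \<and> cf i E' w = var i ^ (E' - E) * cf i E w"
proof -
  assume g: "good i E w" and le: "E \<le> E'"
  have "var i ^ E' = var i ^ E * (var i ^ (E' - E) :: 'a pR)" using le by (simp flip: power_add)
  then have "w * Fract (var i ^ E') 1 = (w * Fract (var i ^ E) 1) * Fract (var i ^ (E' - E)) 1"
    by (simp add: mult.assoc)
  also have "\<dots> = Fract (var i ^ (E' - E) * cf i E w) 1" using cf_eq[OF g] by (simp add: mult.commute)
  finally show ?thesis by (rule good_cf_iff)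
qed

lemma loc_var_good: "w \<in> loc_var i \<Longrightarrow> \<exists>E0. \<forall>E\<ge>E0. good i E w"
proof -
  assume "w \<in> loc_var i"
  then obtain a n where w: "w = Fract a (var i ^ n)" unfolding loc_var_def by auto
  have "w * Fract (var i ^ n) 1 = Fract a 1" unfolding w by (simp add: eq_fract)
  then have "good i n w" unfolding good_def by blast
  then show ?thesis using good_mono by blast
qed

lemma good_add: "good i E w \<Longrightarrow> good i E w' \<Longrightarrow> good i E (w + w') \<and> cf i E (w + w') = cf i E w + cf i E w'"
  by (rule good_cf_iff) (simp add: distrib_right cf_eq)

lemma good_smult: "good i E w \<Longrightarrow> good i E (Fract r 1 * w) \<and> cf i E (Fract r 1 * w) = r * cf i E w"
  by (rule good_cf_iff) (simp add: mult.assoc cf_eq)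

lemma good_zero: "good i E (0::'k::field pR fract) \<and> cf i E (0::'k pR fract) = 0"
  using good_cf_iff[of 0 i E 0] by (simp add: Zero_fract_def)

lemma good_one: "good i E (1::'k::field pR fract) \<and> cf i E (1::'k pR fract) = var i ^ E"
  using good_cf_iff[of 1 i E "var i ^ E"] by simp

lemma good_inv: "good i E (Fract 1 (var i ^ E) :: 'k::field pR fract) \<and> cf i E (Fract 1 (var i ^ E) :: 'k pR fract) = 1"
  using good_cf_iff[of "Fract 1 (var i ^ E)" i E 1] by (simp add: eq_fract)

definition FF :: "('k::field pR, 'a) module \<Rightarrow> nat \<Rightarrow> nat \<Rightarrow> ('a \<times> (nat \<Rightarrow> 'k pR fract)) \<Rightarrow> 'a" where
  "FF N i E p = (if fst p \<in> carrier N then cf i E (snd p i) \<odot>\<^bsub>N\<^esub> fst p else \<zero>\<^bsub>N\<^esub>)"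

definition gd :: "nat \<Rightarrow> nat \<Rightarrow> (('a \<times> (nat \<Rightarrow> 'k::field pR fract)) \<Rightarrow>\<^sub>0 int) \<Rightarrow> bool" where
  "gd i E \<phi> \<longleftrightarrow> (\<forall>p\<in>Poly_Mapping.keys \<phi>. good i E (snd p i))"

lemma (in abelian_group) cancel3: "a \<in> carrier G \<Longrightarrow> b \<in> carrier G \<Longrightarrow> (a \<oplus> b) \<ominus> a \<ominus> b = \<zero>"
proof -
  assume c: "a \<in> carrier G" "b \<in> carrier G"
  have "(a \<oplus> b) \<ominus> a \<ominus> b = (a \<oplus> b) \<oplus> (\<ominus> a \<oplus> \<ominus> b)" using c by (simp add: a_minus_def add.m_assoc)
  also have "\<dots> = (a \<oplus> b) \<oplus> \<ominus> (a \<oplus> b)" using c by (simp add: minus_add)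
  also have "\<dots> = \<zero>" using c by (simp add: r_neg)
  finally show ?thesis .
qed

lemma (in abelian_group) cancel2: "a \<in> carrier G \<Longrightarrow> a \<ominus> a = \<zero>"
  by (simp add: a_minus_def r_neg)

lemma FF_closed: "module (polyR::'k::field pR ring) N \<Longrightarrow> FF N i E p \<in> carrier N"
proof -
  assume "module (polyR::'k::field pR ring) N"
  then interpret module "polyR::'k::field pR ring" N .
  show ?thesis unfolding FF_def by auto
qed

lemma FF_in: "n \<in> carrier N \<Longrightarrow> FF N i E (n, v) = cf i E (v i) \<odot>\<^bsub>N\<^esub> n"
  unfolding FF_def by simp

lemma gd_sub: "Poly_Mapping.keys \<phi> \<subseteq> K \<Longrightarrow> (\<And>p. p \<in> K \<Longrightarrow> good i E (snd p i)) \<Longrightarrow> gd i E \<phi>"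
  unfolding gd_def by auto

lemma keys3: "Poly_Mapping.keys (frag_of a - frag_of b - frag_of c) \<subseteq> {a, b, c}"
  using keys_diff[of "frag_of a - frag_of b" "frag_of c"] keys_diff[of "frag_of a" "frag_of b"] by auto

lemma keys2: "Poly_Mapping.keys (frag_of a - frag_of b) \<subseteq> {a, b}"
  using keys_diff[of "frag_of a" "frag_of b"] by auto

lemma ev_good: "m \<in> carrier Mmod \<Longrightarrow> \<exists>E0. \<forall>E\<ge>E0. good i E (m i)"
  by (rule loc_var_good) simp

lemma relator_sound:
  assumes N: "module (polyR::'k::field pR ring) N" and \<rho>: "\<rho> \<in> tensor_relators polyR N Mmod"
  shows "\<exists>E0. \<forall>E\<ge>E0. gd i E \<rho> \<and> lin N (FF N i E) \<rho> = \<zero>\<^bsub>N\<^esub>"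
proof -
  interpret module polyR N by fact
  have F: "\<And>p. FF N i E p \<in> carrier N" for E using FF_closed[OF N] .
  show ?thesis using \<rho> unfolding tensor_relators_def
  proof (elim UnE CollectE exE conjE)
    fix n n' m assume *: "\<rho> = frag_of (n \<oplus>\<^bsub>N\<^esub> n', m) - frag_of (n, m) - frag_of (n', m)"
      "n \<in> carrier N" "n' \<in> carrier N" "m \<in> carrier Mmod"
    obtain E0 where E0: "\<forall>E\<ge>E0. good i E (m i)" using ev_good[OF *(4)] by blast
    { fix E assume "E \<ge> E0"
      have "gd i E \<rho>" using E0 \<open>E \<ge> E0\<close> unfolding *(1) by (intro gd_sub[OF keys3]) auto
      moreover have "lin N (FF N i E) \<rho> = \<zero>\<^bsub>N\<^esub>"
        unfolding *(1) using * by (simp add: lin_diff[OF F] lin_of[OF F] FF_in smult_r_distr cancel3)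
      ultimately have "gd i E \<rho> \<and> lin N (FF N i E) \<rho> = \<zero>\<^bsub>N\<^esub>" by blast }
    then show ?thesis by blast
  next
    fix n m m' assume *: "\<rho> = frag_of (n, m \<oplus>\<^bsub>Mmod\<^esub> m') - frag_of (n, m) - frag_of (n, m')"
      "n \<in> carrier N" "m \<in> carrier Mmod" "m' \<in> carrier Mmod"
    obtain E1 where E1: "\<forall>E\<ge>E1. good i E (m i)" using ev_good[OF *(3)] by blast
    obtain E2 where E2: "\<forall>E\<ge>E2. good i E (m' i)" using ev_good[OF *(4)] by blast
    { fix E assume E: "E \<ge> max E1 E2"
      have g1: "good i E (m i)" and g2: "good i E (m' i)" using E1 E2 E by auto
      have ga: "good i E (m i + m' i) \<and> cf i E (m i + m' i) = cf i E (m i) + cf i E (m' i)"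
        by (rule good_add[OF g1 g2])
      have "gd i E \<rho>" using g1 g2 ga unfolding *(1) by (intro gd_sub[OF keys3]) auto
      moreover have "lin N (FF N i E) \<rho> = \<zero>\<^bsub>N\<^esub>"
        unfolding *(1) using * ga
        by (simp add: lin_diff[OF F] lin_of[OF F] FF_in cancel3 smult_l_distr[simplified])
      ultimately have "gd i E \<rho> \<and> lin N (FF N i E) \<rho> = \<zero>\<^bsub>N\<^esub>" by blast }
    then show ?thesis by (meson max.boundedI)
  next
    fix r n m assume *: "\<rho> = frag_of (r \<odot>\<^bsub>N\<^esub> n, m) - frag_of (n, r \<odot>\<^bsub>Mmod\<^esub> m)"
      "r \<in> carrier polyR" "n \<in> carrier N" "m \<in> carrier Mmod"
    obtain E0 where E0: "\<forall>E\<ge>E0. good i E (m i)" using ev_good[OF *(4)] by blast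
    { fix E assume "E \<ge> E0"
      then have g: "good i E (m i)" using E0 by auto
      have gs: "good i E (Fract r 1 * m i) \<and> cf i E (Fract r 1 * m i) = r * cf i E (m i)"
        by (rule good_smult[OF g])
      have "gd i E \<rho>" using g gs unfolding *(1) by (intro gd_sub[OF keys2]) auto
      moreover have "lin N (FF N i E) \<rho> = \<zero>\<^bsub>N\<^esub>"
      proof -
        have "cf i E (m i) \<odot>\<^bsub>N\<^esub> (r \<odot>\<^bsub>N\<^esub> n) = (r * cf i E (m i)) \<odot>\<^bsub>N\<^esub> n"
          using smult_assoc1[of "cf i E (m i)" r n] *(3) by (simp add: mult.commute)
        then show ?thesis
          unfolding *(1) using * gs by (simp add: lin_diff[OF F] lin_of[OF F] FF_in cancel2)
      qed
      ultimately have "gd i E \<rho> \<and> lin N (FF N i E) \<rho> = \<zero>\<^bsub>N\<^esub>" by blast }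
    then show ?thesis by blast
  qed
qed

lemma sound:
  assumes N: "module (polyR::'k::field pR ring) N" and x: "x \<in> tensor_rel polyR N Mmod"
  shows "\<exists>E0. \<forall>E\<ge>E0. gd i E x \<and> lin N (FF N i E) x = \<zero>\<^bsub>N\<^esub>"
  using x
proof (induction x rule: tensor_rel.induct)
  case zero
  interpret module polyR N by fact
  show ?case by (simp add: gd_def)
next
  case (plus x \<rho>)
  interpret module polyR N by fact
  have F: "\<And>p. FF N i E p \<in> carrier N" for E using FF_closed[OF N] .
  obtain E1 where E1: "\<forall>E\<ge>E1. gd i E x \<and> lin N (FF N i E) x = \<zero>\<^bsub>N\<^esub>" using plus by blast
  obtain E2 where E2: "\<forall>E\<ge>E2. gd i E \<rho> \<and> lin N (FF N i E) \<rho> = \<zero>\<^bsub>N\<^esub>" using relator_sound[OF N plus(2)] by blast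
  { fix E assume E: "E \<ge> max E1 E2"
    have "gd i E (x + \<rho>)" unfolding gd_def
    proof
      fix p assume "p \<in> Poly_Mapping.keys (x + \<rho>)"
      then have "p \<in> Poly_Mapping.keys x \<or> p \<in> Poly_Mapping.keys \<rho>" using keys_add[of x \<rho>] by blast
      then show "good i E (snd p i)" using E1 E2 E unfolding gd_def by auto
    qed
    moreover have "lin N (FF N i E) (x + \<rho>) = \<zero>\<^bsub>N\<^esub>" using E1 E2 E by (simp add: lin_add[OF F])
    ultimately have "gd i E (x + \<rho>) \<and> lin N (FF N i E) (x + \<rho>) = \<zero>\<^bsub>N\<^esub>" by blast }
  then show ?case by (meson max.boundedI)
next
  case (minus x \<rho>)
  interpret module polyR N by fact
  have F: "\<And>p. FF N i E p \<in> carrier N" for E using FF_closed[OF N] .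
  obtain E1 where E1: "\<forall>E\<ge>E1. gd i E x \<and> lin N (FF N i E) x = \<zero>\<^bsub>N\<^esub>" using minus by blast
  obtain E2 where E2: "\<forall>E\<ge>E2. gd i E \<rho> \<and> lin N (FF N i E) \<rho> = \<zero>\<^bsub>N\<^esub>" using relator_sound[OF N minus(2)] by blast
  { fix E assume E: "E \<ge> max E1 E2"
    have "gd i E (x - \<rho>)" unfolding gd_def
    proof
      fix p assume "p \<in> Poly_Mapping.keys (x - \<rho>)"
      then have "p \<in> Poly_Mapping.keys x \<or> p \<in> Poly_Mapping.keys \<rho>" using keys_diff[of x \<rho>] by blast
      then show "good i E (snd p i)" using E1 E2 E unfolding gd_def by auto
    qed
    moreover have "lin N (FF N i E) (x - \<rho>) = \<zero>\<^bsub>N\<^esub>" using E1 E2 E by (simp add: lin_diff[OF F] cancel2)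
    ultimately have "gd i E (x - \<rho>) \<and> lin N (FF N i E) (x - \<rho>) = \<zero>\<^bsub>N\<^esub>" by blast }
  then show ?case by (meson max.boundedI)
qed

definition u :: "nat \<Rightarrow> nat \<Rightarrow> nat \<Rightarrow> 'k::field pR fract" where
  "u i E = (\<lambda>j. if j = i then Fract 1 (var i ^ E) else 0)"

lemma u_carrier: "u i E \<in> carrier (Mmod :: ('k::field pR, nat \<Rightarrow> 'k pR fract) module)"
proof -
  have "{j. u i E j \<noteq> (0::'k pR fract)} \<subseteq> {i}" unfolding u_def by auto
  then have "finite {j. u i E j \<noteq> (0::'k pR fract)}" by (rule finite_subset) simp
  moreover have "u i E j \<in> (loc_var j :: 'k pR fract set)" for j
    using loc_var_zero[of j] unfolding u_def loc_var_def by auto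
  ultimately show ?thesis by simp
qed

lemma Mmod_ab: "abelian_group (Mmod :: ('k::field pR, nat \<Rightarrow> 'k pR fract) module)"
  using module_Mmod unfolding module_def by blast

lemma finsum_Mmod:
  assumes I: "finite I" and g: "g \<in> I \<rightarrow> carrier (Mmod :: ('k::field pR, nat \<Rightarrow> 'k pR fract) module)"
  shows "finsum (Mmod :: ('k::field pR, nat \<Rightarrow> 'k pR fract) module) g I = (\<lambda>j. \<Sum>i\<in>I. g i j)"
  using I g
proof (induction I rule: finite_induct)
  case empty
  interpret module "polyR :: 'k pR ring" "Mmod :: ('k::field pR, nat \<Rightarrow> 'k pR fract) module" by (rule module_Mmod)
  show ?case by (simp add: finsum_empty)
next
  case (insert i I)
  interpret module "polyR :: 'k pR ring" "Mmod :: ('k::field pR, nat \<Rightarrow> 'k pR fract) module" by (rule module_Mmod)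
  show ?case using insert by (simp add: finsum_insert)
qed

lemma v_repr: "good i E (w::'k::field pR fract) \<Longrightarrow> w = Fract (cf i E w) 1 * Fract 1 (var i ^ E)"
proof -
  assume g: "good i E w"
  have one: "Fract (var i ^ E) 1 * Fract 1 (var i ^ E) = (1 :: 'k pR fract)"
    by (simp add: eq_fract One_fract_def)
  have "w = w * (Fract (var i ^ E) 1 * Fract 1 (var i ^ E))" by (simp only: one mult_1_right)
  also have "\<dots> = (w * Fract (var i ^ E) 1) * Fract 1 (var i ^ E)" by (simp only: mult.assoc)
  also have "\<dots> = Fract (cf i E w) 1 * Fract 1 (var i ^ E)" by (simp only: cf_eq[OF g])
  finally show ?thesis .
qed

lemma claimA:
  assumes N: "module (polyR::'k::field pR ring) N" and n: "n \<in> carrier N" and v: "v \<in> carrier Mmod"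
    and I: "finite I" and sub: "{j. v j \<noteq> 0} \<subseteq> I" and g: "\<And>i. i \<in> I \<Longrightarrow> good i (E i) (v i)"
  shows "frag_of (n, v) - (\<Sum>i\<in>I. frag_of (FF N i (E i) (n, v), u i (E i))) \<in> tensor_rel polyR N Mmod"
proof -
  interpret module polyR N by fact
  interpret M: module "polyR :: 'k pR ring" "Mmod :: ('k::field pR, nat \<Rightarrow> 'k pR fract) module" by (rule module_Mmod)
  define c where "c i = cf i (E i) (v i)" for i
  have gM: "(\<lambda>i. c i \<odot>\<^bsub>Mmod\<^esub> u i (E i)) \<in> I \<rightarrow> carrier Mmod"
    using M.smult_closed[OF _ u_carrier] by auto
  have vsum: "v = finsum Mmod (\<lambda>i. c i \<odot>\<^bsub>Mmod\<^esub> u i (E i)) I"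
  proof -
    have "finsum Mmod (\<lambda>i. c i \<odot>\<^bsub>Mmod\<^esub> u i (E i)) I = (\<lambda>j. \<Sum>i\<in>I. (c i \<odot>\<^bsub>Mmod\<^esub> u i (E i)) j)"
      by (rule finsum_Mmod[OF I gM])
    also have "\<dots> = v"
    proof
      fix j
      have "(\<Sum>i\<in>I. (c i \<odot>\<^bsub>Mmod\<^esub> u i (E i)) j) = (\<Sum>i\<in>I. if i = j then Fract (c j) 1 * Fract 1 (var j ^ E j) else 0)"
        by (rule sum.cong) (auto simp: u_def)
      also have "\<dots> = (if j \<in> I then Fract (c j) 1 * Fract 1 (var j ^ E j) else 0)"
        using I by (simp add: sum.delta)
      also have "\<dots> = v j"
        using sub g v_repr[OF g[of j]] unfolding c_def by auto
      finally show "(\<Sum>i\<in>I. (c i \<odot>\<^bsub>Mmod\<^esub> u i (E i)) j) = v j" .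
    qed
    finally show ?thesis by simp
  qed
  have A: "frag_of (n, v) - (\<Sum>i\<in>I. frag_of (n, c i \<odot>\<^bsub>Mmod\<^esub> u i (E i))) \<in> tensor_rel polyR N Mmod"
    using trel_right_sum[OF Mmod_ab n I gM, of polyR] vsum by simp
  have B: "frag_of (n, c i \<odot>\<^bsub>Mmod\<^esub> u i (E i)) - frag_of (FF N i (E i) (n, v), u i (E i)) \<in> tensor_rel polyR N Mmod" for i
  proof -
    have "frag_of (c i \<odot>\<^bsub>N\<^esub> n, u i (E i)) - frag_of (n, c i \<odot>\<^bsub>Mmod\<^esub> u i (E i)) \<in> tensor_rel polyR N Mmod"
      using n u_carrier by (intro trel_R3) auto
    from trel_uminus[OF this] show ?thesis using n by (simp add: FF_in c_def)
  qed
  have "frag_of (n, v) - (\<Sum>i\<in>I. frag_of (FF N i (E i) (n, v), u i (E i))) =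
     (frag_of (n, v) - (\<Sum>i\<in>I. frag_of (n, c i \<odot>\<^bsub>Mmod\<^esub> u i (E i))))
     + (\<Sum>i\<in>I. frag_of (n, c i \<odot>\<^bsub>Mmod\<^esub> u i (E i)) - frag_of (FF N i (E i) (n, v), u i (E i)))"
    by (simp add: sum_subtractf)
  also have "\<dots> \<in> tensor_rel polyR N Mmod"
    using A B by (intro trel_add trel_sum) auto
  finally show ?thesis .
qed

lemma claimB:
  assumes N: "module (polyR::'k::field pR ring) N" and \<phi>: "\<phi> \<in> formal_sums N Mmod" and I: "finite I"
    and h: "\<And>p. p \<in> Poly_Mapping.keys \<phi> \<Longrightarrow> {j. snd p j \<noteq> 0} \<subseteq> I \<and> (\<forall>i\<in>I. good i (E i) (snd p i))"
  shows "\<phi> - (\<Sum>i\<in>I. frag_extend (\<lambda>p. frag_of (FF N i (E i) p, u i (E i))) \<phi>) \<in> tensor_rel polyR N Mmod"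
proof -
  have "Poly_Mapping.keys \<phi> \<subseteq> {p. fst p \<in> carrier N \<and> snd p \<in> carrier Mmod \<and> {j. snd p j \<noteq> 0} \<subseteq> I \<and> (\<forall>i\<in>I. good i (E i) (snd p i))}"
  proof (rule subsetI)
    fix p assume p: "p \<in> Poly_Mapping.keys \<phi>"
    then have "p \<in> carrier N \<times> carrier Mmod" using \<phi> unfolding formal_sums_def by blast
    then show "p \<in> {p. fst p \<in> carrier N \<and> snd p \<in> carrier Mmod \<and> {j. snd p j \<noteq> 0} \<subseteq> I \<and> (\<forall>i\<in>I. good i (E i) (snd p i))}"
      using h[OF p] by (simp add: mem_Times_iff)
  qed
  then show ?thesis
  proof (induction \<phi> rule: frag_induction)
    case zero then show ?case by simp
  next
    case (one x)
    obtain n v where x: "x = (n, v)" by (cases x)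
    show ?case using one unfolding x by (simp add: claimA[OF N _ _ I])
  next
    case (diff a b)
    have eq: "a - b - (\<Sum>i\<in>I. frag_extend (\<lambda>p. frag_of (FF N i (E i) p, u i (E i))) (a - b)) =
       (a - (\<Sum>i\<in>I. frag_extend (\<lambda>p. frag_of (FF N i (E i) p, u i (E i))) a))
     - (b - (\<Sum>i\<in>I. frag_extend (\<lambda>p. frag_of (FF N i (E i) p, u i (E i))) b))"
      by (simp add: frag_extend_diff sum_subtractf)
    show ?case unfolding eq by (rule trel_diff[OF diff(1) diff(2)])
  qed
qed

lemma complete:
  assumes N: "module (polyR::'k::field pR ring) N" and \<phi>: "\<phi> \<in> formal_sums N Mmod"
    and h: "\<And>i. \<exists>E. gd i E \<phi> \<and> lin N (FF N i E) \<phi> = \<zero>\<^bsub>N\<^esub>"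
  shows "\<phi> \<in> tensor_rel polyR N Mmod"
proof -
  interpret module polyR N by fact
  have Nab: "abelian_group N" using N unfolding module_def by blast
  define I where "I = (\<Union>p\<in>Poly_Mapping.keys \<phi>. {j. snd p j \<noteq> 0})"
  have I: "finite I" unfolding I_def
    using \<phi> unfolding formal_sums_def by (auto simp: Mmod_def)
  define E where "E i = (SOME E. gd i E \<phi> \<and> lin N (FF N i E) \<phi> = \<zero>\<^bsub>N\<^esub>)" for i
  have E: "gd i (E i) \<phi> \<and> lin N (FF N i (E i)) \<phi> = \<zero>\<^bsub>N\<^esub>" for i
    unfolding E_def using h[of i] by (rule someI_ex)
  have D: "\<phi> - (\<Sum>i\<in>I. frag_extend (\<lambda>p. frag_of (FF N i (E i) p, u i (E i))) \<phi>) \<in> tensor_rel polyR N Mmod"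
    by (rule claimB[OF N \<phi> I]) (use E in \<open>auto simp: I_def gd_def\<close>)
  have F: "frag_extend (\<lambda>p. frag_of (FF N i (E i) p, u i (E i))) \<phi> \<in> tensor_rel polyR N Mmod" for i
  proof -
    have 1: "frag_of (lin N (FF N i (E i)) \<phi>, u i (E i)) - frag_extend (\<lambda>p. frag_of (FF N i (E i) p, u i (E i))) \<phi> \<in> tensor_rel polyR N Mmod"
      by (rule trel_left_lin[OF Nab u_carrier FF_closed[OF N]])
    have 2: "frag_of (lin N (FF N i (E i)) \<phi>, u i (E i)) \<in> tensor_rel polyR N Mmod"
      using E[of i] trel_zero_left[OF Nab u_carrier] by simp
    from trel_diff[OF 2 1] show ?thesis by simp
  qed
  have "\<phi> = (\<phi> - (\<Sum>i\<in>I. frag_extend (\<lambda>p. frag_of (FF N i (E i) p, u i (E i))) \<phi>))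
        + (\<Sum>i\<in>I. frag_extend (\<lambda>p. frag_of (FF N i (E i) p, u i (E i))) \<phi>)" by simp
  also have "\<dots> \<in> tensor_rel polyR N Mmod" using D F by (intro trel_add trel_sum) auto
  finally show ?thesis .
qed

lemma ev_finite:
  assumes "finite K" "\<And>p. p \<in> K \<Longrightarrow> \<exists>E0::nat. \<forall>E\<ge>E0. P p E"
  shows "\<exists>E0. \<forall>E\<ge>E0. \<forall>p\<in>K. P p E"
  using assms
proof (induction K rule: finite_induct)
  case empty then show ?case by auto
next
  case (insert x K)
  then obtain E1 where E1: "\<forall>E\<ge>E1. \<forall>p\<in>K. P p E" by auto
  obtain E2 where E2: "\<forall>E\<ge>E2. P x E" using insert by blast
  show ?case by (rule exI[of _ "max E1 E2"]) (use E1 E2 in auto)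
qed

lemma gd_ev:
  assumes "\<phi> \<in> formal_sums N (Mmod :: ('k::field pR, nat \<Rightarrow> 'k pR fract) module)"
  shows "\<exists>E0. \<forall>E\<ge>E0. gd i E \<phi>"
proof -
  have "\<exists>E0. \<forall>E\<ge>E0. \<forall>p\<in>Poly_Mapping.keys \<phi>. good i E (snd p i)"
  proof (rule ev_finite)
    fix p assume "p \<in> Poly_Mapping.keys \<phi>"
    then have "snd p \<in> carrier Mmod" using assms unfolding formal_sums_def by auto
    then show "\<exists>E0. \<forall>E\<ge>E0. good i E (snd p i)" by (rule ev_good)
  qed simp
  then show ?thesis unfolding gd_def .
qed

lemma FF_zero: "module (polyR::'k::field pR ring) N \<Longrightarrow> snd p i = 0 \<Longrightarrow> FF N i E p = \<zero>\<^bsub>N\<^esub>"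
proof -
  assume N: "module (polyR::'k::field pR ring) N" and z: "snd p i = 0"
  interpret module "polyR::'k::field pR ring" N by fact
  show ?thesis unfolding FF_def using z good_zero[of i E, where 'k='k] smult_l_null[of "fst p"] by auto
qed

lemma keys_formal_sums: "\<phi> \<in> formal_sums N M \<Longrightarrow> p \<in> Poly_Mapping.keys \<phi> \<Longrightarrow> fst p \<in> carrier N \<and> snd p \<in> carrier M"
  unfolding formal_sums_def by auto

lemma formal_diff: "a \<in> formal_sums N M \<Longrightarrow> b \<in> formal_sums N M \<Longrightarrow> a - b \<in> formal_sums N M"
  unfolding formal_sums_def using keys_diff[of a b] by blast

lemma module_ab: "module R N \<Longrightarrow> abelian_group N"
  unfolding module_def by blast

lemma flat_fwd:
  fixes N1 :: "('k::field pR, 'a) module" and N2 :: "('k pR, 'b) module" and N3 :: "('k pR, 'c) module"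
  assumes N1: "module polyR N1" and N2: "module polyR N2" and N3: "module polyR N3"
    and f: "mod_hom polyR N1 N2 f" and g: "mod_hom polyR N2 N3 g" and ex: "exact_at N1 N2 N3 f g"
    and \<phi>: "\<phi> \<in> formal_sums N2 Mmod" and pg: "push g \<phi> \<in> tensor_rel polyR N3 Mmod"
  shows "\<exists>\<psi>\<in>formal_sums N1 Mmod. \<phi> - push f \<psi> \<in> tensor_rel polyR N2 Mmod"
proof -
  interpret M2: module "polyR :: 'k pR ring" N2 by fact
  have F2: "\<And>p. FF N2 i E p \<in> carrier N2" for i E by (rule FF_closed[OF N2])
  have F3: "\<And>p. FF N3 i E p \<in> carrier N3" for i E by (rule FF_closed[OF N3])
  have keys2: "Poly_Mapping.keys \<phi> \<subseteq> carrier N2 \<times> UNIV" using \<phi> unfolding formal_sums_def by auto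
  have "\<forall>i. \<exists>Em. gd i (fst Em) \<phi> \<and> snd Em \<in> carrier N1 \<and> f (snd Em) = lin N2 (FF N2 i (fst Em)) \<phi>"
  proof
    fix i
    obtain E3 where E3: "\<forall>E\<ge>E3. gd i E (push g \<phi>) \<and> lin N3 (FF N3 i E) (push g \<phi>) = \<zero>\<^bsub>N3\<^esub>"
      using sound[OF N3 pg] by blast
    obtain E4 where E4: "\<forall>E\<ge>E4. gd i E \<phi>" using gd_ev[OF \<phi>] by blast
    define E where "E = max E3 E4"
    have "lin N3 (FF N3 i E) (push g \<phi>) = g (lin N2 (FF N2 i E) \<phi>)"
    proof (rule lin_push[OF module_ab[OF N2] module_ab[OF N3] g F2 F3 _ keys2])
      fix n v assume n: "n \<in> carrier N2"
      show "FF N3 i E (g n, v) = g (FF N2 i E (n, v))"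
        using n mod_hom_closed[OF g n] by (simp add: FF_in mod_hom_smult[OF g])
    qed
    then have "g (lin N2 (FF N2 i E) \<phi>) = \<zero>\<^bsub>N3\<^esub>" using E3 unfolding E_def by auto
    moreover have "lin N2 (FF N2 i E) \<phi> \<in> carrier N2" by (rule M2.lin_closed[OF F2])
    ultimately have "lin N2 (FF N2 i E) \<phi> \<in> {y \<in> carrier N2. g y = \<zero>\<^bsub>N3\<^esub>}" by (intro CollectI conjI)
    then have "lin N2 (FF N2 i E) \<phi> \<in> f ` carrier N1" using ex unfolding exact_at_def by simp
    then obtain m where "lin N2 (FF N2 i E) \<phi> = f m" "m \<in> carrier N1" by (rule imageE)
    moreover have "gd i E \<phi>" using E4 unfolding E_def by auto
    ultimately show "\<exists>Em. gd i (fst Em) \<phi> \<and> snd Em \<in> carrier N1 \<and> f (snd Em) = lin N2 (FF N2 i (fst Em)) \<phi>"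
      by (intro exI[of _ "(E, m)"]) simp
  qed
  then have "\<exists>Em. \<forall>i. gd i (fst (Em i)) \<phi> \<and> snd (Em i) \<in> carrier N1 \<and> f (snd (Em i)) = lin N2 (FF N2 i (fst (Em i))) \<phi>"
    by (rule choice)
  then obtain Em where Em: "\<And>i. gd i (fst (Em i)) \<phi> \<and> snd (Em i) \<in> carrier N1 \<and> f (snd (Em i)) = lin N2 (FF N2 i (fst (Em i))) \<phi>"
    by blast
  define Ef where "Ef i = fst (Em i)" for i
  define mf where "mf i = snd (Em i)" for i
  have Ef: "gd i (Ef i) \<phi>" and mf: "mf i \<in> carrier N1" and fmf: "f (mf i) = lin N2 (FF N2 i (Ef i)) \<phi>" for i
    using Em unfolding Ef_def mf_def by auto
  define I where "I = (\<Union>p\<in>Poly_Mapping.keys \<phi>. {j. snd p j \<noteq> 0})"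
  have I: "finite I" unfolding I_def
    using \<phi> unfolding formal_sums_def by (auto simp: Mmod_def)
  define \<psi> where "\<psi> = (\<Sum>j\<in>I. frag_of (mf j, u j (Ef j) :: nat \<Rightarrow> 'k pR fract))"
  have \<psi>: "\<psi> \<in> formal_sums N1 Mmod"
    unfolding formal_sums_def \<psi>_def using keys_sum[of "\<lambda>j. frag_of (mf j, u j (Ef j))" I] mf u_carrier by fastforce
  have pf: "push f \<psi> = (\<Sum>j\<in>I. frag_of (f (mf j), u j (Ef j)))"
    unfolding \<psi>_def by (simp add: push_sum push_of)
  have pf_formal: "push f \<psi> \<in> formal_sums N2 Mmod"
    by (rule push_formal[OF \<psi>]) (use mod_hom_closed[OF f] in auto)
  have keysD: "p \<in> Poly_Mapping.keys \<phi> \<or> (\<exists>j\<in>I. p = (f (mf j), u j (Ef j)))"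
    if "p \<in> Poly_Mapping.keys (\<phi> - push f \<psi>)" for p
    using that keys_diff[of \<phi> "push f \<psi>"] keys_sum[of "\<lambda>j. frag_of (f (mf j), u j (Ef j))" I] unfolding pf by auto
  have "\<phi> - push f \<psi> \<in> tensor_rel polyR N2 Mmod"
  proof (rule complete[OF N2 formal_diff[OF \<phi> pf_formal]])
    fix i
    show "\<exists>E. gd i E (\<phi> - push f \<psi>) \<and> lin N2 (FF N2 i E) (\<phi> - push f \<psi>) = \<zero>\<^bsub>N2\<^esub>"
    proof (cases "i \<in> I")
      case True
      have "gd i (Ef i) (\<phi> - push f \<psi>)" unfolding gd_def
      proof
        fix p assume "p \<in> Poly_Mapping.keys (\<phi> - push f \<psi>)"
        then consider "p \<in> Poly_Mapping.keys \<phi>" | j where "j \<in> I" "p = (f (mf j), u j (Ef j))" using keysD by blast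
        then show "good i (Ef i) (snd p i)"
        proof cases
          case 1 then show ?thesis using Ef[of i] unfolding gd_def by blast
        next
          case 2 then show ?thesis using good_inv[where 'k='k] good_zero[where 'k='k] by (auto simp: u_def)
        qed
      qed
      moreover have "lin N2 (FF N2 i (Ef i)) (\<phi> - push f \<psi>) = \<zero>\<^bsub>N2\<^esub>"
      proof -
        have "(\<Oplus>\<^bsub>N2\<^esub>j\<in>I. FF N2 i (Ef i) (f (mf j), u j (Ef j))) = (\<Oplus>\<^bsub>N2\<^esub>j\<in>I. if i = j then f (mf i) else \<zero>\<^bsub>N2\<^esub>)"
        proof (rule M2.add.finprod_cong')
          fix j assume j: "j \<in> I"
          show "FF N2 i (Ef i) (f (mf j), u j (Ef j)) = (if i = j then f (mf i) else \<zero>\<^bsub>N2\<^esub>)"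
          proof (cases "i = j")
            case True
            then show ?thesis using mod_hom_closed[OF f mf[of i]] good_inv[of i "Ef i", where 'k='k] M2.smult_one
              by (simp add: FF_in u_def)
          next
            case False
            then show ?thesis using FF_zero[OF N2, of "(f (mf j), u j (Ef j))" i] by (simp add: u_def)
          qed
        qed (use mod_hom_closed[OF f mf] in auto)
        also have "\<dots> = f (mf i)"
          using M2.add.finprod_singleton[OF True I, of "\<lambda>_. f (mf i)"] mod_hom_closed[OF f mf[of i]] by auto
        finally have s: "(\<Oplus>\<^bsub>N2\<^esub>j\<in>I. FF N2 i (Ef i) (f (mf j), u j (Ef j))) = f (mf i)" .
        have "lin N2 (FF N2 i (Ef i)) (\<phi> - push f \<psi>) = lin N2 (FF N2 i (Ef i)) \<phi> \<ominus>\<^bsub>N2\<^esub> (\<Oplus>\<^bsub>N2\<^esub>j\<in>I. FF N2 i (Ef i) (f (mf j), u j (Ef j)))"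
          unfolding pf by (simp add: M2.lin_diff[OF F2] M2.lin_sum[OF F2 I] M2.lin_of[OF F2])
        also have "\<dots> = \<zero>\<^bsub>N2\<^esub>" using s fmf[of i] M2.cancel2[OF M2.lin_closed[OF F2]] by simp
        finally show ?thesis .
      qed
      ultimately show ?thesis by blast
    next
      case False
      have z: "snd p i = 0" if "p \<in> Poly_Mapping.keys (\<phi> - push f \<psi>)" for p
        using keysD[OF that] False unfolding I_def by (auto simp: u_def)
      have "gd i 0 (\<phi> - push f \<psi>)" unfolding gd_def using z good_zero[where 'k='k] by simp
      moreover have "lin N2 (FF N2 i 0) (\<phi> - push f \<psi>) = \<zero>\<^bsub>N2\<^esub>"
        by (rule M2.lin_zero_fun) (rule FF_zero[OF N2 z])
      ultimately show ?thesis by blast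
    qed
  qed
  then show ?thesis using \<psi> by blast
qed

lemma flat_bwd:
  fixes N1 :: "('k::field pR, 'a) module" and N2 :: "('k pR, 'b) module" and N3 :: "('k pR, 'c) module"
  assumes N3: "module polyR N3"
    and f: "mod_hom polyR N1 N2 f" and g: "mod_hom polyR N2 N3 g" and ex: "exact_at N1 N2 N3 f g"
    and \<psi>: "\<psi> \<in> formal_sums N1 Mmod" and d: "\<phi> - push f \<psi> \<in> tensor_rel polyR N2 Mmod"
  shows "push g \<phi> \<in> tensor_rel polyR N3 Mmod"
proof -
  have "push g \<phi> = push g (\<phi> - push f \<psi>) + push (g \<circ> f) \<psi>"
    by (simp add: push_diff push_push)
  also have "\<dots> \<in> tensor_rel polyR N3 Mmod"
  proof (rule trel_add)
    show "push g (\<phi> - push f \<psi>) \<in> tensor_rel polyR N3 Mmod" by (rule push_trel[OF g d])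
    show "push (g \<circ> f) \<psi> \<in> tensor_rel polyR N3 Mmod"
    proof (rule push_zero_map[OF module_ab[OF N3]])
      fix p assume p: "p \<in> Poly_Mapping.keys \<psi>"
      then have "fst p \<in> carrier N1" "snd p \<in> carrier Mmod" using keys_formal_sums[OF \<psi>] by auto
      moreover have "f (fst p) \<in> {y \<in> carrier N2. g y = \<zero>\<^bsub>N3\<^esub>}"
        using ex \<open>fst p \<in> carrier N1\<close> unfolding exact_at_def by (metis imageI)
      ultimately show "(g \<circ> f) (fst p) = \<zero>\<^bsub>N3\<^esub> \<and> snd p \<in> carrier Mmod" by simp
    qed
  qed
  finally show ?thesis .
qed

lemma flat: "flat_mod (polyR :: ('k::field) pR ring) Mmod TYPE('a) TYPE('b) TYPE('c)"
  unfolding flat_mod_def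
proof (intro conjI allI impI ballI)
  show "module (polyR :: 'k pR ring) Mmod" by (rule module_Mmod)
  fix N1 :: "('k pR, 'a) module" and N2 :: "('k pR, 'b) module" and N3 :: "('k pR, 'c) module" and f g \<phi>
  assume a: "module polyR N1 \<and> module polyR N2 \<and> module polyR N3 \<and> mod_hom polyR N1 N2 f \<and> mod_hom polyR N2 N3 g \<and> exact_at N1 N2 N3 f g"
    and \<phi>: "\<phi> \<in> formal_sums N2 Mmod"
  show "push g \<phi> \<in> tensor_rel polyR N3 Mmod \<longleftrightarrow> (\<exists>\<psi>\<in>formal_sums N1 Mmod. \<phi> - push f \<psi> \<in> tensor_rel polyR N2 Mmod)"
    using flat_fwd[of N1 N2 N3 f g \<phi>] flat_bwd[of N3 N1 N2 f g] a \<phi> by blast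
qed

definition dv :: "nat \<Rightarrow> nat \<Rightarrow> 'k::field pR \<Rightarrow> 'k pR" where
  "dv i E p = Abs_poly_mapping (\<lambda>\<mu>. Poly_Mapping.lookup p (\<mu> + Poly_Mapping.single i E))"

lemma lookup_dv: "Poly_Mapping.lookup (dv i E p) \<mu> = Poly_Mapping.lookup p (\<mu> + Poly_Mapping.single i E)"
proof -
  have "{\<mu>. Poly_Mapping.lookup p (\<mu> + Poly_Mapping.single i E) \<noteq> 0} = (\<lambda>\<mu>. \<mu> + Poly_Mapping.single i E) -` Poly_Mapping.keys p"
    by (auto simp: in_keys_iff)
  moreover have "finite ((\<lambda>\<mu>. \<mu> + Poly_Mapping.single i E) -` Poly_Mapping.keys p)"
    by (rule finite_vimageI) (auto simp: inj_def)
  ultimately show ?thesis unfolding dv_def by (simp add: Abs_poly_mapping_inverse)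
qed

lemma dv_add: "dv i E (p + q) = dv i E p + dv i E q"
  by (rule poly_mapping_eqI) (simp add: lookup_dv lookup_add)

lemma dv_zero[simp]: "dv i E 0 = 0"
  by (rule poly_mapping_eqI) (simp add: lookup_dv)

lemma dv_sum: "dv i E (sum f A) = (\<Sum>a\<in>A. dv i E (f a))"
  by (induction A rule: infinite_finite_induct) (simp_all add: dv_add)

lemma dv_single:
  "dv i E (Poly_Mapping.single \<gamma> c) =
     (if E \<le> Poly_Mapping.lookup \<gamma> i then Poly_Mapping.single (\<gamma> - Poly_Mapping.single i E) c else 0)"
proof (rule poly_mapping_eqI)
  fix \<mu>
  show "Poly_Mapping.lookup (dv i E (Poly_Mapping.single \<gamma> c)) \<mu> =
        Poly_Mapping.lookup (if E \<le> Poly_Mapping.lookup \<gamma> i then Poly_Mapping.single (\<gamma> - Poly_Mapping.single i E) c else 0) \<mu>"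
  proof (cases "E \<le> Poly_Mapping.lookup \<gamma> i")
    case True
    have "\<gamma> = \<mu> + Poly_Mapping.single i E \<longleftrightarrow> \<gamma> - Poly_Mapping.single i E = \<mu>"
    proof
      assume "\<gamma> = \<mu> + Poly_Mapping.single i E" then show "\<gamma> - Poly_Mapping.single i E = \<mu>" by simp
    next
      assume h: "\<gamma> - Poly_Mapping.single i E = \<mu>"
      show "\<gamma> = \<mu> + Poly_Mapping.single i E"
        unfolding h[symmetric] using True
        by (intro poly_mapping_eqI) (auto simp: lookup_add lookup_minus lookup_single when_def)
    qed
    then show ?thesis using True by (simp add: lookup_dv lookup_single when_def)
  next
    case False
    have "\<gamma> \<noteq> \<mu> + Poly_Mapping.single i E"
    proof
      assume "\<gamma> = \<mu> + Poly_Mapping.single i E"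
      then have "Poly_Mapping.lookup \<gamma> i = Poly_Mapping.lookup \<mu> i + E" by (simp add: lookup_add)
      then show False using False by simp
    qed
    then show ?thesis using False by (simp add: lookup_dv lookup_single when_def)
  qed
qed

lemma expand_pm: "finite K \<Longrightarrow> Poly_Mapping.keys p \<subseteq> K \<Longrightarrow> p = (\<Sum>\<mu>\<in>K. Poly_Mapping.single \<mu> (Poly_Mapping.lookup p \<mu>))"
proof -
  assume K: "finite K" "Poly_Mapping.keys p \<subseteq> K"
  show ?thesis
  proof (rule poly_mapping_eqI)
    fix \<nu>
    have "Poly_Mapping.lookup (\<Sum>\<mu>\<in>K. Poly_Mapping.single \<mu> (Poly_Mapping.lookup p \<mu>)) \<nu>
        = (\<Sum>\<mu>\<in>K. if \<mu> = \<nu> then Poly_Mapping.lookup p \<mu> else 0)"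
      by (simp add: lookup_sum lookup_single when_def)
    also have "\<dots> = Poly_Mapping.lookup p \<nu>"
      using K by (auto simp: sum.delta' in_keys_iff)
    finally show "Poly_Mapping.lookup p \<nu> = Poly_Mapping.lookup (\<Sum>\<mu>\<in>K. Poly_Mapping.single \<mu> (Poly_Mapping.lookup p \<mu>)) \<nu>" by simp
  qed
qed

lemma dv_single_mult:
  assumes "Poly_Mapping.lookup \<beta> i = 0"
  shows "dv i E (Poly_Mapping.single \<alpha> a * Poly_Mapping.single \<beta> b) = dv i E (Poly_Mapping.single \<alpha> a) * Poly_Mapping.single \<beta> (b::'k::field)"
proof -
  have li: "Poly_Mapping.lookup (\<alpha> + \<beta>) i = Poly_Mapping.lookup \<alpha> i" using assms by (simp add: lookup_add)
  have eq: "\<alpha> + \<beta> - Poly_Mapping.single i E = \<alpha> - Poly_Mapping.single i E + \<beta>" if "E \<le> Poly_Mapping.lookup \<alpha> i"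
    using that assms by (intro poly_mapping_eqI) (auto simp: lookup_add lookup_minus lookup_single when_def)
  show ?thesis by (simp add: mult_single dv_single li eq)
qed

lemma dv_mult_free:
  assumes q: "\<And>\<beta>. \<beta> \<in> Poly_Mapping.keys q \<Longrightarrow> Poly_Mapping.lookup \<beta> i = 0"
  shows "dv i E (p * q) = dv i E p * (q :: 'k::field pR)"
proof -
  let ?P = "Poly_Mapping.keys p" and ?Q = "Poly_Mapping.keys q"
  have ep: "p = (\<Sum>\<alpha>\<in>?P. Poly_Mapping.single \<alpha> (Poly_Mapping.lookup p \<alpha>))" by (rule expand_pm) auto
  have eq: "q = (\<Sum>\<beta>\<in>?Q. Poly_Mapping.single \<beta> (Poly_Mapping.lookup q \<beta>))" by (rule expand_pm) auto
  have "dv i E (p * q) = dv i E ((\<Sum>\<alpha>\<in>?P. Poly_Mapping.single \<alpha> (Poly_Mapping.lookup p \<alpha>)) * (\<Sum>\<beta>\<in>?Q. Poly_Mapping.single \<beta> (Poly_Mapping.lookup q \<beta>)))"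
    using ep eq by simp
  also have "\<dots> = (\<Sum>\<alpha>\<in>?P. \<Sum>\<beta>\<in>?Q. dv i E (Poly_Mapping.single \<alpha> (Poly_Mapping.lookup p \<alpha>) * Poly_Mapping.single \<beta> (Poly_Mapping.lookup q \<beta>)))"
    by (simp add: sum_product dv_sum)
  also have "\<dots> = (\<Sum>\<alpha>\<in>?P. \<Sum>\<beta>\<in>?Q. dv i E (Poly_Mapping.single \<alpha> (Poly_Mapping.lookup p \<alpha>)) * Poly_Mapping.single \<beta> (Poly_Mapping.lookup q \<beta>))"
    by (intro sum.cong refl dv_single_mult q)
  also have "\<dots> = dv i E (\<Sum>\<alpha>\<in>?P. Poly_Mapping.single \<alpha> (Poly_Mapping.lookup p \<alpha>)) * (\<Sum>\<beta>\<in>?Q. Poly_Mapping.single \<beta> (Poly_Mapping.lookup q \<beta>))"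
    by (simp add: sum_product dv_sum)
  also have "\<dots> = dv i E p * q" using ep eq by simp
  finally show ?thesis .
qed

lemma var_pow: "var i ^ E = (Poly_Mapping.single (Poly_Mapping.single i E) 1 :: 'k::field pR)"
proof (induction E)
  case 0 then show ?case by simp
next
  case (Suc E)
  have "var i ^ Suc E = var i * (var i ^ E :: 'k pR)" by simp
  also have "\<dots> = (Poly_Mapping.single (Poly_Mapping.single i 1) 1 :: 'k pR) * Poly_Mapping.single (Poly_Mapping.single i E) 1"
    by (simp only: Suc.IH) (simp add: var_def)
  also have "\<dots> = Poly_Mapping.single (Poly_Mapping.single i (Suc E)) 1"
    by (simp add: mult_single single_add[symmetric])
  finally show ?case .
qed

lemma dv_var: "dv i E (var i ^ E * c) = (c :: 'k::field pR)"
proof -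
  let ?s = "Poly_Mapping.single i E" and ?Q = "Poly_Mapping.keys c"
  have ec: "c = (\<Sum>\<beta>\<in>?Q. Poly_Mapping.single \<beta> (Poly_Mapping.lookup c \<beta>))" by (rule expand_pm) auto
  have "dv i E (var i ^ E * c) = dv i E (Poly_Mapping.single ?s 1 * (\<Sum>\<beta>\<in>?Q. Poly_Mapping.single \<beta> (Poly_Mapping.lookup c \<beta>)))"
    using ec by (simp add: var_pow)
  also have "\<dots> = (\<Sum>\<beta>\<in>?Q. dv i E (Poly_Mapping.single (?s + \<beta>) (Poly_Mapping.lookup c \<beta>)))"
    by (simp add: sum_distrib_left dv_sum mult_single)
  also have "\<dots> = (\<Sum>\<beta>\<in>?Q. Poly_Mapping.single \<beta> (Poly_Mapping.lookup c \<beta>))"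
    by (intro sum.cong refl) (simp add: dv_single lookup_add)
  also have "\<dots> = c" using ec by simp
  finally show ?thesis .
qed

lemma finsum_rot: "finite A \<Longrightarrow> finsum (ring_of_type :: 'r::comm_ring_1 ring) f A = sum f A"
proof (induction A rule: finite_induct)
  case empty
  interpret cring "ring_of_type :: 'r ring" by (rule cring_rot)
  show ?case by simp
next
  case (insert x A)
  interpret cring "ring_of_type :: 'r ring" by (rule cring_rot)
  show ?case using insert by (simp add: finsum_insert)
qed

lemma torsion:
  fixes N :: "('k::field pR, 'b) module"
  assumes N: "module polyR N" and fp: "fin_presented polyR N" and y: "y \<in> carrier N"
    and tor: "\<And>i. \<exists>E. var i ^ E \<odot>\<^bsub>N\<^esub> y = \<zero>\<^bsub>N\<^esub>"
  shows "y = \<zero>\<^bsub>N\<^esub>"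
proof -
  interpret module "polyR :: 'k pR ring" N by fact
  obtain n :: nat and gs and m :: nat and ks where gs: "gs \<in> {..<n} \<rightarrow> carrier N"
    and gen: "\<forall>y\<in>carrier N. \<exists>c. c \<in> {..<n} \<rightarrow> carrier (polyR :: 'k pR ring) \<and> y = finsum N (\<lambda>j. c j \<odot>\<^bsub>N\<^esub> gs j) {..<n}"
    and kc: "\<forall>l<m. (\<forall>j. ks l j \<in> carrier (polyR :: 'k pR ring)) \<and> (\<forall>j\<ge>n. ks l j = \<zero>\<^bsub>polyR :: 'k pR ring\<^esub>)"
    and keq: "{c. (\<forall>j. c j \<in> carrier (polyR :: 'k pR ring)) \<and> (\<forall>j\<ge>n. c j = \<zero>\<^bsub>polyR :: 'k pR ring\<^esub>) \<and>
              finsum N (\<lambda>j. c j \<odot>\<^bsub>N\<^esub> gs j) {..<n} = \<zero>\<^bsub>N\<^esub>}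
          = {(\<lambda>j. finsum (polyR :: 'k pR ring) (\<lambda>l. a l \<otimes>\<^bsub>polyR :: 'k pR ring\<^esub> ks l j) {..<m}) | a. a \<in> {..<m} \<rightarrow> carrier (polyR :: 'k pR ring)}"
    using fp unfolding fin_presented_def by (elim exE conjE) (rule that; assumption)
  have ks0: "ks l j = 0" if "l < m" "n \<le> j" for l j using kc that by simp
  define B where "B = (\<Union>l<m. \<Union>j<n. \<Union>\<mu>\<in>Poly_Mapping.keys (ks l j). Poly_Mapping.keys \<mu>)"
  have "finite B" unfolding B_def 
    by (intro finite_UN_I finite_lessThan finite_keys)
  then obtain i where i: "i \<notin> B" using ex_new_if_finite[OF infinite_UNIV_nat] by blast
  have free: "Poly_Mapping.lookup \<mu> i = 0" if "l < m" "\<mu> \<in> Poly_Mapping.keys (ks l j)" for l j \<mu>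
  proof (cases "j < n")
    case True then show ?thesis using i that unfolding B_def by (auto simp: in_keys_iff)
  next
    case False then show ?thesis using that ks0[of l j] by simp
  qed
  obtain c where c: "c \<in> {..<n} \<rightarrow> carrier (polyR :: 'k pR ring)" and yc: "y = finsum N (\<lambda>j. c j \<odot>\<^bsub>N\<^esub> gs j) {..<n}"
    using gen y by blast
  obtain E where E: "var i ^ E \<odot>\<^bsub>N\<^esub> y = \<zero>\<^bsub>N\<^esub>" using tor by blast
  define c' where "c' j = (if j < n then var i ^ E * c j else 0)" for j
  have "finsum N (\<lambda>j. c' j \<odot>\<^bsub>N\<^esub> gs j) {..<n} = finsum N (\<lambda>j. var i ^ E \<odot>\<^bsub>N\<^esub> (c j \<odot>\<^bsub>N\<^esub> gs j)) {..<n}"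
    using gs smult_assoc1[simplified] by (intro finsum_cong') (auto simp: c'_def Pi_iff)
  also have "\<dots> = var i ^ E \<odot>\<^bsub>N\<^esub> y"
    unfolding yc using gs by (intro finsum_smult_ldistr[symmetric]) auto
  finally have "finsum N (\<lambda>j. c' j \<odot>\<^bsub>N\<^esub> gs j) {..<n} = \<zero>\<^bsub>N\<^esub>" using E by simp
  then have "c' \<in> {c. (\<forall>j. c j \<in> carrier (polyR :: 'k pR ring)) \<and> (\<forall>j\<ge>n. c j = \<zero>\<^bsub>polyR :: 'k pR ring\<^esub>) \<and>
              finsum N (\<lambda>j. c j \<odot>\<^bsub>N\<^esub> gs j) {..<n} = \<zero>\<^bsub>N\<^esub>}"
    by (simp add: c'_def)
  note mem = this[unfolded keq]
  from mem obtain a where a: "c' = (\<lambda>j. finsum (polyR :: 'k pR ring) (\<lambda>l. a l \<otimes>\<^bsub>polyR :: 'k pR ring\<^esub> ks l j) {..<m})"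
    by (elim CollectE exE conjE)
  then have a': "c' j = (\<Sum>l<m. a l * ks l j)" for j by (simp add: finsum_rot)
  define c'' where "c'' j = (\<Sum>l<m. dv i E (a l) * ks l j)" for j
  have cc: "c'' j = c j" if "j < n" for j
  proof -
    have "c j = dv i E (c' j)" using that by (simp add: c'_def dv_var)
    also have "\<dots> = (\<Sum>l<m. dv i E (a l * ks l j))" by (simp add: a' dv_sum)
    also have "\<dots> = c'' j" unfolding c''_def
      by (intro sum.cong refl dv_mult_free) (auto intro: free)
    finally show ?thesis by simp
  qed
  have c''eq: "c'' = (\<lambda>j. finsum (polyR :: 'k pR ring) (\<lambda>l. dv i E (a l) \<otimes>\<^bsub>polyR :: 'k pR ring\<^esub> ks l j) {..<m})"
    by (simp add: c''_def finsum_rot fun_eq_iff)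
  have "c'' \<in> {(\<lambda>j. finsum (polyR :: 'k pR ring) (\<lambda>l. a l \<otimes>\<^bsub>polyR :: 'k pR ring\<^esub> ks l j) {..<m}) | a. a \<in> {..<m} \<rightarrow> carrier (polyR :: 'k pR ring)}"
    unfolding c''eq by (intro CollectI exI[of _ "\<lambda>l. dv i E (a l)"] conjI refl) simp
  note mem2 = this[folded keq]
  then have "finsum N (\<lambda>j. c'' j \<odot>\<^bsub>N\<^esub> gs j) {..<n} = \<zero>\<^bsub>N\<^esub>"
    by (elim CollectE conjE)
  moreover have "finsum N (\<lambda>j. c'' j \<odot>\<^bsub>N\<^esub> gs j) {..<n} = y"
    unfolding yc using gs by (intro finsum_cong') (auto simp: cc)
  ultimately show ?thesis by simp
qed

lemma fp_faithful:
  "tensor_faithful_on (polyR :: ('k::field) pR ring) Mmod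
     (\<lambda>N::('k pR,'a) module. fin_presented polyR N) (\<lambda>N'::('k pR,'b) module. fin_presented polyR N')"
  unfolding tensor_faithful_on_def
proof (intro allI impI ballI)
  fix N :: "('k pR,'a) module" and N' :: "('k pR,'b) module" and f g x
  assume a: "module polyR N \<and> module polyR N' \<and> fin_presented polyR N \<and> fin_presented polyR N' \<and>
       mod_hom polyR N N' f \<and> mod_hom polyR N N' g \<and>
       (\<forall>\<phi>\<in>formal_sums N Mmod. push f \<phi> - push g \<phi> \<in> tensor_rel polyR N' Mmod)"
    and x: "x \<in> carrier N"
  have N': "module polyR N'" and fp: "fin_presented polyR N'" and f: "mod_hom polyR N N' f" and g: "mod_hom polyR N N' g"
    and H: "\<And>\<phi>. \<phi> \<in> formal_sums N Mmod \<Longrightarrow> push f \<phi> - push g \<phi> \<in> tensor_rel polyR N' Mmod"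
    using a by auto
  interpret M': module "polyR :: 'k pR ring" N' by fact
  have fx: "f x \<in> carrier N'" and gx: "g x \<in> carrier N'" using mod_hom_closed[OF f x] mod_hom_closed[OF g x] .
  have "f x \<ominus>\<^bsub>N'\<^esub> g x = \<zero>\<^bsub>N'\<^esub>"
  proof (rule torsion[OF N' fp])
    show "f x \<ominus>\<^bsub>N'\<^esub> g x \<in> carrier N'" using fx gx by simp
    fix i
    define w where "w = (u i 0 :: nat \<Rightarrow> 'k pR fract)"
    let ?\<phi> = "frag_of (x, w)"
    have \<phi>: "?\<phi> \<in> formal_sums N Mmod" unfolding formal_sums_def using x u_carrier unfolding w_def by simp
    have "push f ?\<phi> - push g ?\<phi> \<in> tensor_rel polyR N' Mmod" by (rule H[OF \<phi>])
    then have T: "frag_of (f x, w) - frag_of (g x, w) \<in> tensor_rel polyR N' Mmod" by (simp add: push_of)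
    obtain E where "gd i E (frag_of (f x, w) - frag_of (g x, w)) \<and>
        lin N' (FF N' i E) (frag_of (f x, w) - frag_of (g x, w)) = \<zero>\<^bsub>N'\<^esub>"
      using sound[OF N' T, of i] by blast
    then have "FF N' i E (f x, w) \<ominus>\<^bsub>N'\<^esub> FF N' i E (g x, w) = \<zero>\<^bsub>N'\<^esub>"
      by (simp add: M'.lin_diff[OF FF_closed[OF N']] M'.lin_of[OF FF_closed[OF N']])
    moreover have "w i = (1 :: 'k pR fract)" by (simp add: w_def u_def One_fract_def)
    ultimately have "var i ^ E \<odot>\<^bsub>N'\<^esub> f x \<ominus>\<^bsub>N'\<^esub> var i ^ E \<odot>\<^bsub>N'\<^esub> g x = \<zero>\<^bsub>N'\<^esub>"
      using fx gx good_one[of i E, where 'k='k] by (simp add: FF_in)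
    moreover have "var i ^ E \<odot>\<^bsub>N'\<^esub> (f x \<ominus>\<^bsub>N'\<^esub> g x) = var i ^ E \<odot>\<^bsub>N'\<^esub> f x \<ominus>\<^bsub>N'\<^esub> var i ^ E \<odot>\<^bsub>N'\<^esub> g x"
      using fx gx by (simp add: a_minus_def M'.smult_r_distr M'.smult_r_minus)
    ultimately show "\<exists>E. var i ^ E \<odot>\<^bsub>N'\<^esub> (f x \<ominus>\<^bsub>N'\<^esub> g x) = \<zero>\<^bsub>N'\<^esub>" by auto
  qed
  moreover have "(f x \<ominus>\<^bsub>N'\<^esub> g x) \<oplus>\<^bsub>N'\<^esub> g x = f x" using fx gx
    by (simp add: a_minus_def M'.add.m_assoc M'.l_neg)
  ultimately show "f x = g x" using gx by simp
qed

lemma fp_ff: "fp_faithfully_flat (polyR :: ('k::field) pR ring) Mmod TYPE('a) TYPE('b) TYPE('c)"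
  unfolding fp_faithfully_flat_def using flat fp_faithful by blast

lemma quot_module_simps[simp]:
  "carrier (quot_module R I) = carrier (R Quot I)"
  "monoid.mult (quot_module R I) = monoid.mult (R Quot I)"
  "monoid.one (quot_module R I) = monoid.one (R Quot I)"
  "ring.zero (quot_module R I) = ring.zero (R Quot I)"
  "ring.add (quot_module R I) = ring.add (R Quot I)"
  "module.smult (quot_module R I) = (\<lambda>s C. monoid.mult (R Quot I) (a_r_coset R I s) C)"
  by (simp_all add: quot_module_def)

lemma module_quot:
  assumes R: "cring R" and I: "ideal I R"
  shows "module R (quot_module R I)"
proof -
  interpret cring R by fact
  interpret ideal I R by fact
  interpret Q: cring "R Quot I" by (rule quotient_is_cring[OF R])
  have h: "a_r_coset R I \<in> ring_hom R (R Quot I)" by (rule rcos_ring_hom)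
  have hc: "I +>\<^bsub>R\<^esub> a \<in> carrier (R Quot I)" if "a \<in> carrier R" for a using ring_hom_closed[OF h that] .
  have ab: "abelian_group (quot_module R I)"
  proof (rule abelian_groupI)
    fix x assume "x \<in> carrier (quot_module R I)"
    then show "\<exists>y\<in>carrier (quot_module R I). y \<oplus>\<^bsub>quot_module R I\<^esub> x = \<zero>\<^bsub>quot_module R I\<^esub>"
      using Q.l_neg Q.a_inv_closed by (metis quot_module_simps(1,4,5))
  qed (simp_all add: Q.a_ac)
  show ?thesis
  proof (rule moduleI[OF R ab])
    fix a x assume "a \<in> carrier R" "x \<in> carrier (quot_module R I)"
    then show "a \<odot>\<^bsub>quot_module R I\<^esub> x \<in> carrier (quot_module R I)" using hc by simp
  next
    fix a b x assume a: "a \<in> carrier R" "b \<in> carrier R" "x \<in> carrier (quot_module R I)"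
    then show "(a \<oplus>\<^bsub>R\<^esub> b) \<odot>\<^bsub>quot_module R I\<^esub> x = a \<odot>\<^bsub>quot_module R I\<^esub> x \<oplus>\<^bsub>quot_module R I\<^esub> b \<odot>\<^bsub>quot_module R I\<^esub> x"
      using hc ring_hom_add[OF h a(1) a(2)] by (simp add: Q.l_distr)
  next
    fix a x y assume a: "a \<in> carrier R" "x \<in> carrier (quot_module R I)" "y \<in> carrier (quot_module R I)"
    then show "a \<odot>\<^bsub>quot_module R I\<^esub> (x \<oplus>\<^bsub>quot_module R I\<^esub> y) = a \<odot>\<^bsub>quot_module R I\<^esub> x \<oplus>\<^bsub>quot_module R I\<^esub> a \<odot>\<^bsub>quot_module R I\<^esub> y"
      using hc by (simp add: Q.r_distr)
  next
    fix a b x assume a: "a \<in> carrier R" "b \<in> carrier R" "x \<in> carrier (quot_module R I)"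
    then show "(a \<otimes>\<^bsub>R\<^esub> b) \<odot>\<^bsub>quot_module R I\<^esub> x = a \<odot>\<^bsub>quot_module R I\<^esub> (b \<odot>\<^bsub>quot_module R I\<^esub> x)"
      using hc ring_hom_mult[OF h a(1) a(2)] by (simp add: Q.m_assoc)
  next
    fix x assume "x \<in> carrier (quot_module R I)"
    then show "\<one>\<^bsub>R\<^esub> \<odot>\<^bsub>quot_module R I\<^esub> x = x"
      using ring_hom_one[OF h] by simp
  qed
qed

definition J0 :: "'k::field pR set" where "J0 = {p. Poly_Mapping.lookup p 0 = 0}"

lemma J0_mult: "Poly_Mapping.lookup (a::'k::field pR) 0 = 0 \<Longrightarrow> Poly_Mapping.lookup (x * a) 0 = 0"
proof (rule ccontr)
  assume a: "Poly_Mapping.lookup a 0 = 0" and n: "Poly_Mapping.lookup (x * a) 0 \<noteq> 0"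
  then have "0 \<in> Poly_Mapping.keys (x * a)" by (simp add: in_keys_iff)
  then obtain \<alpha> \<beta> :: "nat \<Rightarrow>\<^sub>0 nat" where "0 = \<alpha> + \<beta>" "\<beta> \<in> Poly_Mapping.keys a" using keys_mult[of x a] by blast
  moreover have "\<beta> = 0"
  proof (rule poly_mapping_eqI)
    fix k
    have "Poly_Mapping.lookup (0::nat \<Rightarrow>\<^sub>0 nat) k = Poly_Mapping.lookup (\<alpha> + \<beta>) k" using \<open>0 = \<alpha> + \<beta>\<close> by simp
    then show "Poly_Mapping.lookup \<beta> k = Poly_Mapping.lookup 0 k" by (simp add: lookup_add)
  qed
  ultimately show False using a by (simp add: in_keys_iff)
qed

lemma J0_mult2: "Poly_Mapping.lookup (a::'k::field pR) 0 = 0 \<Longrightarrow> Poly_Mapping.lookup (a * x) 0 = 0"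
  by (subst mult.commute) (rule J0_mult)

lemma ideal_J0: "ideal (J0 :: 'k::field pR set) polyR"
proof -
  interpret cring "polyR :: 'k pR ring" by (rule cring_rot)
  show ?thesis
  proof (rule idealI)
    show "ring (polyR :: 'k pR ring)" by (rule ring_axioms)
    show "subgroup J0 (add_monoid (polyR :: 'k pR ring))"
      by (rule add.subgroupI) (auto simp: J0_def lookup_add intro!: exI[of _ "0::'k pR"])
  qed (auto simp: J0_def J0_mult J0_mult2)
qed

lemma max_ideal_sub: "max_ideal \<subseteq> (J0 :: 'k::field pR set)"
proof -
  interpret cring "polyR :: 'k pR ring" by (rule cring_rot)
  show ?thesis unfolding max_ideal_def
  proof (rule genideal_minimal[OF ideal_J0])
    show "range var \<subseteq> (J0 :: 'k pR set)"
    proof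
      fix p assume "p \<in> range (var :: nat \<Rightarrow> 'k pR)"
      then obtain i where p: "p = var i" by blast
      have "Poly_Mapping.single i (1::nat) \<noteq> 0"
        by (metis lookup_single_eq lookup_zero one_neq_zero)
      then show "p \<in> J0" unfolding p J0_def var_def by (simp add: lookup_single when_def)
    qed
  qed
qed

lemma one_notin: "(1 :: 'k::field pR) \<notin> max_ideal"
  using max_ideal_sub by (auto simp: J0_def)

lemma ideal_max: "ideal (max_ideal :: 'k::field pR set) polyR"
proof -
  interpret cring "polyR :: 'k pR ring" by (rule cring_rot)
  show ?thesis unfolding max_ideal_def by (rule genideal_ideal) simp
qed

lemma var_in_max: "var i \<in> (max_ideal :: 'k::field pR set)"
proof -
  interpret cring "polyR :: 'k pR ring" by (rule cring_rot)
  show ?thesis unfolding max_ideal_def using genideal_self[of "range var"] by auto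
qed

lemma module_QM: "module (polyR :: 'k::field pR ring) (quot_module polyR max_ideal)"
  by (rule module_quot[OF cring_rot ideal_max])

lemma quot_zero: "ring.zero (R Quot I) = I"
  by (simp add: FactRing_def)

lemma conj3: "carrier (quot_module (polyR :: 'k::field pR ring) max_ideal) \<noteq> {max_ideal}"
proof
  interpret ideal "max_ideal :: 'k pR set" "polyR :: 'k pR ring" by (rule ideal_max)
  assume c: "carrier (quot_module (polyR :: 'k::field pR ring) max_ideal) = {max_ideal}"
  have "max_ideal +>\<^bsub>polyR\<^esub> 1 \<in> carrier (polyR Quot (max_ideal :: 'k pR set))"
    using ring_hom_closed[OF rcos_ring_hom, of 1] by simp
  then have "max_ideal +>\<^bsub>polyR\<^esub> 1 = (max_ideal :: 'k pR set)" using c by simp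
  moreover have "(1 :: 'k pR) \<in> max_ideal +>\<^bsub>polyR\<^esub> 1" by (rule a_rcos_self) simp
  ultimately show False using one_notin by auto
qed

lemma conj4: "formal_sums (quot_module (polyR :: 'k::field pR ring) max_ideal) Mmod
           \<subseteq> tensor_rel (polyR :: 'k pR ring) (quot_module polyR max_ideal) Mmod"
proof
  interpret ideal "max_ideal :: 'k pR set" "polyR :: 'k pR ring" by (rule ideal_max)
  interpret Q: cring "polyR Quot (max_ideal :: 'k pR set)" by (rule quotient_is_cring[OF cring_rot])
  fix \<phi> assume \<phi>: "\<phi> \<in> formal_sums (quot_module (polyR :: 'k::field pR ring) max_ideal) Mmod"
  show "\<phi> \<in> tensor_rel (polyR :: 'k pR ring) (quot_module polyR max_ideal) Mmod"
  proof (rule complete[OF module_QM \<phi>])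
    fix i
    obtain E0 where E0: "\<forall>E\<ge>E0. gd i E \<phi>" using gd_ev[OF \<phi>] by blast
    have "gd i (Suc E0) \<phi>" using E0 by simp
    moreover have "lin (quot_module polyR max_ideal) (FF (quot_module polyR max_ideal) i (Suc E0)) \<phi> = \<zero>\<^bsub>quot_module polyR max_ideal\<^esub>"
    proof (rule abelian_group.lin_zero_fun[OF module_ab[OF module_QM]])
      fix p assume p: "p \<in> Poly_Mapping.keys \<phi>"
      obtain n v where pv: "p = (n, v)" by (cases p)
      have n: "n \<in> carrier (polyR Quot (max_ideal :: 'k pR set))" using keys_formal_sums[OF \<phi> p] pv by simp
      have "gd i E0 \<phi>" using E0 by simp
      then have g: "good i E0 (v i)" using p pv unfolding gd_def by auto
      have cf: "cf i (Suc E0) (v i) = var i * cf i E0 (v i)" using good_mono[OF g, of "Suc E0"] by simp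
      have inI: "var i * cf i E0 (v i) \<in> max_ideal"
        using I_r_closed[OF var_in_max, of "cf i E0 (v i)"] by simp
      have "FF (quot_module polyR max_ideal) i (Suc E0) p = max_ideal \<otimes>\<^bsub>polyR Quot max_ideal\<^esub> n"
        using n pv cf a_rcos_const[OF inI] by (simp add: FF_in)
      also have "\<dots> = \<zero>\<^bsub>polyR Quot max_ideal\<^esub>" using Q.l_null[OF n] by (simp add: quot_zero)
      finally show "FF (quot_module polyR max_ideal) i (Suc E0) p = \<zero>\<^bsub>quot_module polyR max_ideal\<^esub>" by simp
    qed
    ultimately show "\<exists>E. gd i E \<phi> \<and> lin (quot_module polyR max_ideal) (FF (quot_module polyR max_ideal) i E) \<phi> = \<zero>\<^bsub>quot_module polyR max_ideal\<^esub>"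
      by blast
  qed
qed

lemma conj2: "\<not> faithfully_flat (polyR :: 'k::field pR ring) Mmod TYPE('k pR set) TYPE('k pR set) TYPE('k pR set)"
proof
  assume "faithfully_flat (polyR :: 'k::field pR ring) Mmod TYPE('k pR set) TYPE('k pR set) TYPE('k pR set)"
  then have tf: "tensor_faithful_on (polyR :: 'k::field pR ring) Mmod (\<lambda>N::('k pR,'k pR set) module. True) (\<lambda>N'::('k pR,'k pR set) module. True)"
    unfolding faithfully_flat_def by blast
  let ?Q = "quot_module (polyR :: 'k::field pR ring) max_ideal"
  interpret QM: module "polyR :: 'k pR ring" ?Q by (rule module_QM)
  interpret ideal "max_ideal :: 'k pR set" "polyR :: 'k pR ring" by (rule ideal_max)
  have h1: "mod_hom polyR ?Q ?Q id" unfolding mod_hom_def by simp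
  have h2: "mod_hom polyR ?Q ?Q (\<lambda>_. \<zero>\<^bsub>?Q\<^esub>)" unfolding mod_hom_def
    by (auto simp del: quot_module_simps)
  have all: "\<forall>\<phi>\<in>formal_sums ?Q Mmod. push id \<phi> - push (\<lambda>_. \<zero>\<^bsub>?Q\<^esub>) \<phi> \<in> tensor_rel polyR ?Q Mmod"
  proof
    fix \<phi> assume \<phi>: "\<phi> \<in> formal_sums ?Q Mmod"
    have "push id \<phi> \<in> formal_sums ?Q Mmod" "push (\<lambda>_. \<zero>\<^bsub>?Q\<^esub>) \<phi> \<in> formal_sums ?Q Mmod"
      by (rule push_formal[OF \<phi>], simp, rule push_formal[OF \<phi>], simp del: quot_module_simps)
    then show "push id \<phi> - push (\<lambda>_. \<zero>\<^bsub>?Q\<^esub>) \<phi> \<in> tensor_rel polyR ?Q Mmod"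
      using conj4 by (intro trel_diff) auto
  qed
  have x: "max_ideal +>\<^bsub>polyR\<^esub> 1 \<in> carrier ?Q"
    using ring_hom_closed[OF rcos_ring_hom, of 1] by simp
  have "id (max_ideal +>\<^bsub>polyR\<^esub> 1) = \<zero>\<^bsub>?Q\<^esub>"
    using tf h1 h2 all x QM.module_axioms unfolding tensor_faithful_on_def by blast
  then have "max_ideal +>\<^bsub>polyR\<^esub> 1 = (max_ideal :: 'k pR set)" by (simp add: quot_zero)
  moreover have "(1 :: 'k pR) \<in> max_ideal +>\<^bsub>polyR\<^esub> 1" by (rule a_rcos_self) simp
  ultimately show False using one_notin by auto
qed

theorem mainTheorem14:
  shows "fp_faithfully_flat (polyR :: ('k::field) pR ring) Mmod TYPE('a) TYPE('b) TYPE('c)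
       \<and> \<not> faithfully_flat (polyR :: 'k pR ring) Mmod TYPE('k pR set) TYPE('k pR set) TYPE('k pR set)
       \<and> carrier (quot_module (polyR :: 'k pR ring) max_ideal) \<noteq> {max_ideal}
       \<and> formal_sums (quot_module (polyR :: 'k pR ring) max_ideal) Mmod
           \<subseteq> tensor_rel (polyR :: 'k pR ring) (quot_module polyR max_ideal) Mmod"
  using fp_ff conj2 conj3 conj4 by blast

end
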